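(* Let $G=(X,b,m,c)$ be a weighted graph with $c=0$ and let $p\in(1,\infty)$. Let $o\in X$ and let $(X_n)$ be an increasing exhaustion of $X$ by finite sets with $o\in X_1$ and $X_{n+1}\setminus X_n\subseteq\partial_eX_n$. (a) For every $n$ there is $u_n\colon X\to\mathbb{R}$ with $\Delta_pu_n=0$ on $X_n\setminus\{o\}$, $u_n(o)=1$, $u_n=0$ on $X\setminus X_n$, and $\mathcal{E}_p(u_n)=\mathrm{cap}_p(o,X_n)$. Moreover $0\le u_n\le u_{n+1}\le1$. (b) As $n\to\infty$, $u_n$ converges monotonically and in $(D^p,\|\cdot\|_{o,p})$ to a function $u\in D_0^p$ (the $p$-harmonic potential at $o$) which satisfies $\Delta_pu=0$ on $X\setminus\{o\}$, $u(o)=1$, $0<u\le1$, and $\mathcal{E}_p(u)=\mathrm{cap}_p(o)$. (c) $u$ is constant if and only if $\mathrm{cap}_p(o)=0$ if and only if $\Delta_pu(o)=0$. Moreover, if $u$ is not constant then $\inf u=0$. (d) A Green's function with pole $o$ exists if and only if $u$ is not constant, and in that case $g(x,o)=Cu(x)$ with $C=[m(o)\Delta_pu(o)]^{-1/(p-1)}$. In particular $g(\cdot,o)\in D_0^p$ and $g(o,o)^{-1/(p-1)}g(\cdot,o)$ is the $p$-harmonic potential at $o$.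
   Context: Weighted graph $G=(X,b,m,c)$: $X$ countably infinite; $b$ symmetric, nonnegative, zero on the diagonal, $\sum_yb(x,y)<\infty$; $m>0$; $c\ge0$; $x\sim y$ iff $b(x,y)>0$; $X$ connected. $\partial_eV=\{y\in X\setminus V:y\sim z\text{ for some }z\in V\}$. $\mathcal{E}_p(f)=\frac12\sum_{x,y}b(x,y)|f(x)-f(y)|^p+\sum_xc(x)|f(x)|^p$, $D^p=\{f:\mathcal{E}_p(f)<\infty\}$, $\|f\|_{o,p}=(\mathcal{E}_p(f)+|f(o)|^p)^{1/p}$, and $D_0^p$ is the closure of the finitely supported functions $C_c(X)$ in $(D^p,\|\cdot\|_{o,p})$. For $V\subseteq X$ and finite $K\subseteq V$, $\mathrm{cap}_p(K,V)=\inf\{\mathcal{E}_p(\varphi):\varphi\in C_c(V),\varphi\ge1\text{ on }K\}$ ($C_c(V)$: finitely supported functions vanishing outside $V$), $\mathrm{cap}_p(o,V)=\mathrm{cap}_p(\{o\},V)$, $\mathrm{cap}_p(o)=\mathrm{cap}_p(o,X)$. $a^{\langle p-1\rangle}=|a|^{p-2}a$; $\Delta_pf(x)=\frac1{m(x)}\sum_yb(x,y)(f(x)-f(y))^{\langle p-1\rangle}$. A Green's function with pole $o$ is a minimal positive solution $g(\cdot,o)$ of $\Delta_pg(\cdot,o)=\frac1m\mathds{1}_o$ on $X$. *)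

theory Defs
  imports "HOL-Analysis.Analysis"
begin

text \<open>Weighted graph (X,b,m,c) with vertex set = UNIV of type 'a.\<close>
definition weighted_graph :: "('a \<Rightarrow> 'a \<Rightarrow> real) \<Rightarrow> ('a \<Rightarrow> real) \<Rightarrow> ('a \<Rightarrow> real) \<Rightarrow> bool" where
  "weighted_graph b m c \<longleftrightarrow>
     countable (UNIV :: 'a set) \<and> infinite (UNIV :: 'a set) \<and>
     (\<forall>x y. b x y = b y x) \<and> (\<forall>x y. 0 \<le> b x y) \<and> (\<forall>x. b x x = 0) \<and>
     (\<forall>x. (\<lambda>y. b x y) summable_on UNIV) \<and>
     (\<forall>x. 0 < m x) \<and> (\<forall>x. 0 \<le> c x) \<and>
     (\<forall>x y. (x, y) \<in> {(x, y). 0 < b x y}\<^sup>*)"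

definition edge_bdry :: "('a \<Rightarrow> 'a \<Rightarrow> real) \<Rightarrow> 'a set \<Rightarrow> 'a set" where
  "edge_bdry b V = {y. y \<notin> V \<and> (\<exists>z\<in>V. 0 < b y z)}"

text \<open>p-energy (as an infinite sum; meaningful on D^p).\<close>
definition energy :: "('a \<Rightarrow> 'a \<Rightarrow> real) \<Rightarrow> ('a \<Rightarrow> real) \<Rightarrow> real \<Rightarrow> ('a \<Rightarrow> real) \<Rightarrow> real" where
  "energy b c p f =
     (1/2) * (\<Sum>\<^sub>\<infinity>(x, y)\<in>UNIV. b x y * \<bar>f x - f y\<bar> powr p)
     + (\<Sum>\<^sub>\<infinity>x\<in>UNIV. c x * \<bar>f x\<bar> powr p)"

text \<open>D^p: functions of finite p-energy (nonnegative summands, so summability = finiteness).\<close>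
definition Dp :: "('a \<Rightarrow> 'a \<Rightarrow> real) \<Rightarrow> ('a \<Rightarrow> real) \<Rightarrow> real \<Rightarrow> ('a \<Rightarrow> real) set" where
  "Dp b c p = {f. (\<lambda>(x, y). b x y * \<bar>f x - f y\<bar> powr p) summable_on UNIV
                 \<and> (\<lambda>x. c x * \<bar>f x\<bar> powr p) summable_on UNIV}"

definition dnorm_op :: "('a \<Rightarrow> 'a \<Rightarrow> real) \<Rightarrow> ('a \<Rightarrow> real) \<Rightarrow> real \<Rightarrow> 'a \<Rightarrow> ('a \<Rightarrow> real) \<Rightarrow> real" where
  "dnorm_op b c p x0 f = (energy b c p f + \<bar>f x0\<bar> powr p) powr (1/p)"

definition D0p :: "('a \<Rightarrow> 'a \<Rightarrow> real) \<Rightarrow> ('a \<Rightarrow> real) \<Rightarrow> real \<Rightarrow> 'a \<Rightarrow> ('a \<Rightarrow> real) set" where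
  "D0p b c p x0 = {f. f \<in> Dp b c p \<and>
      (\<forall>e>0. \<exists>\<phi>. finite {x. \<phi> x \<noteq> 0} \<and> dnorm_op b c p x0 (\<lambda>x. f x - \<phi> x) < e)}"

definition cap :: "('a \<Rightarrow> 'a \<Rightarrow> real) \<Rightarrow> ('a \<Rightarrow> real) \<Rightarrow> real \<Rightarrow> 'a set \<Rightarrow> 'a set \<Rightarrow> real" where
  "cap b c p K V = Inf {energy b c p \<phi> | \<phi>. finite {x. \<phi> x \<noteq> 0} \<and> (\<forall>x. x \<notin> V \<longrightarrow> \<phi> x = 0)
                                         \<and> (\<forall>x\<in>K. 1 \<le> \<phi> x)}"

text \<open>a^{<q>} with q = p-1: |a|^{p-2} a = sgn a * |a|^{p-1}.\<close>
definition spow :: "real \<Rightarrow> real \<Rightarrow> real" where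
  "spow q a = sgn a * \<bar>a\<bar> powr q"

text \<open>Functions for which the p-Laplacian is defined (absolutely convergent sums).\<close>
definition Fp :: "('a \<Rightarrow> 'a \<Rightarrow> real) \<Rightarrow> real \<Rightarrow> ('a \<Rightarrow> real) set" where
  "Fp b p = {f. \<forall>x. (\<lambda>y. b x y * \<bar>f x - f y\<bar> powr (p - 1)) summable_on UNIV}"

definition plap :: "('a \<Rightarrow> 'a \<Rightarrow> real) \<Rightarrow> ('a \<Rightarrow> real) \<Rightarrow> real \<Rightarrow> ('a \<Rightarrow> real) \<Rightarrow> 'a \<Rightarrow> real" where
  "plap b m p f x = (1 / m x) * (\<Sum>\<^sub>\<infinity>y\<in>UNIV. b x y * spow (p - 1) (f x - f y))"

definition green_eq :: "('a \<Rightarrow> 'a \<Rightarrow> real) \<Rightarrow> ('a \<Rightarrow> real) \<Rightarrow> real \<Rightarrow> 'a \<Rightarrow> ('a \<Rightarrow> real) \<Rightarrow> bool" where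
  "green_eq b m p x0 g \<longleftrightarrow> (\<forall>x. 0 < g x) \<and> g \<in> Fp b p \<and>
      (\<forall>x. plap b m p g x = (if x = x0 then 1 / m x else 0))"

definition is_green :: "('a \<Rightarrow> 'a \<Rightarrow> real) \<Rightarrow> ('a \<Rightarrow> real) \<Rightarrow> real \<Rightarrow> 'a \<Rightarrow> ('a \<Rightarrow> real) \<Rightarrow> bool" where
  "is_green b m p x0 g \<longleftrightarrow> green_eq b m p x0 g \<and>
      (\<forall>h. green_eq b m p x0 h \<longrightarrow> (\<forall>x. g x \<le> h x))"

definition dirichlet_sol :: "('a \<Rightarrow> 'a \<Rightarrow> real) \<Rightarrow> ('a \<Rightarrow> real) \<Rightarrow> ('a \<Rightarrow> real) \<Rightarrow> real \<Rightarrow> 'a \<Rightarrow> 'a set \<Rightarrow> ('a \<Rightarrow> real) \<Rightarrow> bool" where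
  "dirichlet_sol b m c p x0 V v \<longleftrightarrow> v \<in> Fp b p \<and>
      (\<forall>x\<in>V - {x0}. plap b m p v x = 0) \<and> v x0 = 1 \<and> (\<forall>x. x \<notin> V \<longrightarrow> v x = 0) \<and>
      energy b c p v = cap b c p {x0} V"

end

theory Submission
  imports Defs
begin

lemma bern_powr: fixes s p :: real assumes "p > 1" "s \<ge> 0" shows "1 + p * (s - 1) \<le> s powr p"
proof (cases "s = 0")
  case True then show ?thesis using assms by simp
next
  case False
  have "(\<lambda>x. x powr p) x - (\<lambda>x. x powr p) 1 \<ge> p * (x - 1)" if "x > 0" for x
  proof (rule convex_on_imp_above_tangent[where A="{0<..}"])
    show "convex_on {0<..} (\<lambda>x. x powr p)" using powr_convex assms by simp
    show "((\<lambda>x. x powr p) has_field_derivative p) (at 1 within {0<..})"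
      by (rule derivative_eq_intros | simp)+
  qed (use that in \<open>auto simp: interior_open\<close>)
  from this[of s] False assms show ?thesis by simp
qed

lemma spow_0[simp]: "spow q 0 = 0" by (simp add: spow_def)
lemma spow_neg: "spow q (- a) = - spow q a" by (simp add: spow_def)
lemma abs_spow: "\<bar>spow q a\<bar> = \<bar>a\<bar> powr q" by (cases "a = 0") (simp_all add: spow_def abs_mult)
lemma spow_pos: "a > 0 \<Longrightarrow> spow q a = a powr q" by (simp add: spow_def)
lemma spow_negv: "a < 0 \<Longrightarrow> spow q a = - ((- a) powr q)" by (simp add: spow_def)
lemma spow_nonneg_iff: "spow q a \<ge> 0 \<longleftrightarrow> a \<ge> 0"
  by (cases "a > 0"; cases "a = 0") (auto simp: spow_def)
lemma spow_nonpos_iff: "spow q a \<le> 0 \<longleftrightarrow> a \<le> 0"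
  by (cases "a > 0"; cases "a = 0") (auto simp: spow_def)
lemma spow_zero_iff: "spow q a = 0 \<longleftrightarrow> a = 0"
  by (cases "a = 0") (auto simp: spow_def sgn_if)

lemma spow_strict_mono: assumes "q > 0" "a < c" shows "spow q a < spow q c"
proof -
  consider "0 \<le> a" | "a < 0 \<and> c \<le> 0" | "a < 0 \<and> c > 0" by linarith
  then show ?thesis
  proof cases
    case 1 then show ?thesis using assms
      by (cases "a = 0") (auto simp: spow_def intro!: powr_less_mono2)
  next
    case 2 then show ?thesis using assms
      by (cases "c = 0") (auto simp: spow_def intro!: powr_less_mono2)
  next
    case 3
    then have *: "(- a) powr q > 0" "c powr q > 0" by auto
    have "spow q a = -((-a) powr q)" "spow q c = c powr q" using 3 by (auto simp: spow_negv spow_pos)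
    with * show ?thesis by linarith
  qed
qed

lemma spow_mono: assumes "q > 0" "a \<le> c" shows "spow q a \<le> spow q c"
  using spow_strict_mono[OF assms(1)] assms(2) by (cases "a = c") (auto simp: less_le)

lemma spow_eq_iff: assumes "q > 0" shows "spow q a = spow q c \<longleftrightarrow> a = c"
  using spow_strict_mono[OF assms, of a c] spow_strict_mono[OF assms, of c a]
  by (cases a c rule: linorder_cases) auto

lemma spow_times_self: assumes "q \<ge> 0" shows "spow q a * a = \<bar>a\<bar> powr (q + 1)"
proof (cases "a = 0")
  case True then show ?thesis by simp
next
  case False
  have "spow q a * a = \<bar>a\<bar> powr q * \<bar>a\<bar>"
    by (simp add: spow_def) (metis abs_sgn mult.commute sgn_mult_abs)
  also have "\<dots> = \<bar>a\<bar> powr (q + 1)" using False by (simp add: powr_add)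
  finally show ?thesis .
qed

lemma spow_scale: assumes "c \<ge> 0" shows "spow q (c * a) = c powr q * spow q a"
  using assms by (cases "c = 0") (auto simp: spow_def abs_mult powr_mult sgn_mult)

lemma abs_spow_le: assumes "q \<ge> 0" "\<bar>a\<bar> \<le> M" shows "\<bar>spow q a\<bar> \<le> M powr q"
  using assms by (simp add: abs_spow powr_mono2)

lemma abs_spow_le1: assumes "q \<ge> 0" "\<bar>a\<bar> \<le> 1" shows "\<bar>spow q a\<bar> \<le> 1"
  using assms by (simp add: abs_spow powr_le1)

lemma tendsto_spow:
  fixes a :: "nat \<Rightarrow> real"
  assumes q: "q > 0" and a: "a \<longlonglongrightarrow> l"
  shows "(\<lambda>n. spow q (a n)) \<longlonglongrightarrow> spow q l"
proof -
  consider "l > 0" | "l < 0" | "l = 0" by linarith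
  then show ?thesis
  proof cases
    case 1
    then have ev: "eventually (\<lambda>n. a n > 0) sequentially"
      using a order_tendstoD(1) by blast
    have "(\<lambda>n. a n powr q) \<longlonglongrightarrow> l powr q"
      using 1 by (intro tendsto_intros a) auto
    moreover have "eventually (\<lambda>n. a n powr q = spow q (a n)) sequentially"
      using ev by eventually_elim (simp add: spow_pos)
    ultimately show ?thesis using 1 Lim_transform_eventually by (fastforce simp: spow_pos)
  next
    case 2
    then have ev: "eventually (\<lambda>n. a n < 0) sequentially"
      using a order_tendstoD(2) by blast
    have "(\<lambda>n. - ((- a n) powr q)) \<longlonglongrightarrow> - ((- l) powr q)"
      using 2 by (intro tendsto_intros a) auto
    moreover have "eventually (\<lambda>n. - ((- a n) powr q) = spow q (a n)) sequentially"
      using ev by eventually_elim (simp add: spow_negv)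
    ultimately show ?thesis using 2 Lim_transform_eventually by (fastforce simp: spow_negv)
  next
    case 3
    have "(\<lambda>n. \<bar>a n\<bar> powr q) \<longlonglongrightarrow> \<bar>l\<bar> powr q"
      using q by (intro tendsto_powr' tendsto_intros a) auto
    then have "(\<lambda>n. \<bar>spow q (a n)\<bar>) \<longlonglongrightarrow> 0" using 3 by (simp add: abs_spow)
    then show ?thesis using 3 by (simp add: tendsto_rabs_zero_iff)
  qed
qed

lemma convex_ineq:
  fixes a c p :: real assumes p: "p > 1"
  shows "\<bar>c\<bar> powr p + p * spow (p - 1) c * (a - c) \<le> \<bar>a\<bar> powr p"
proof (cases "c = 0")
  case True then show ?thesis by simp
next
  case False
  define s where "s = a / c"
  have a: "a = s * c" using False by (simp add: s_def)
  have cp: "\<bar>c\<bar> powr p > 0" using False by simp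
  have key: "1 + p * (s - 1) \<le> \<bar>s\<bar> powr p"
  proof (cases "s \<ge> 0")
    case True then show ?thesis using bern_powr[OF p True] by simp
  next
    case False
    have "p * (s - 1) \<le> p * (-1)" using p False by (intro mult_left_mono) auto
    then have "1 + p * (s - 1) \<le> 0" using p by linarith
    then show ?thesis using powr_ge_zero[of "\<bar>s\<bar>" p] by linarith
  qed
  have e1: "spow (p - 1) c * c = \<bar>c\<bar> powr p"
    using spow_times_self[of "p - 1" c] p by simp
  have "\<bar>c\<bar> powr p + p * spow (p - 1) c * (a - c) = \<bar>c\<bar> powr p * (1 + p * (s - 1))"
    unfolding a using e1 by (simp add: algebra_simps)
  also have "\<dots> \<le> \<bar>c\<bar> powr p * \<bar>s\<bar> powr p" using key cp by simp
  also have "\<dots> = \<bar>a\<bar> powr p" by (simp add: a abs_mult powr_mult mult.commute)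
  finally show ?thesis .
qed

lemma diff_powr_le:
  fixes a c p :: real assumes p: "p > 0"
  shows "\<bar>a - c\<bar> powr p \<le> 2 powr p * (\<bar>a\<bar> powr p + \<bar>c\<bar> powr p)"
proof -
  have "\<bar>a - c\<bar> \<le> 2 * max \<bar>a\<bar> \<bar>c\<bar>" by linarith
  then have "\<bar>a - c\<bar> powr p \<le> (2 * max \<bar>a\<bar> \<bar>c\<bar>) powr p" using p by (intro powr_mono2) auto
  also have "\<dots> = 2 powr p * max \<bar>a\<bar> \<bar>c\<bar> powr p" by (simp add: powr_mult)
  also have "\<dots> \<le> 2 powr p * (\<bar>a\<bar> powr p + \<bar>c\<bar> powr p)"
    by (intro mult_left_mono) (auto simp: max_def)
  finally show ?thesis .
qed

lemma summable_by_bound: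
  fixes f :: "'b \<Rightarrow> real"
  assumes "g summable_on A" "\<And>x. x \<in> A \<Longrightarrow> \<bar>f x\<bar> \<le> g x"
  shows "f summable_on A"
proof -
  have "(\<lambda>x. \<bar>f x\<bar>) summable_on A"
    by (rule summable_on_comparison_test[OF assms(1)]) (use assms(2) in auto)
  then show ?thesis by (rule abs_summable_summable[of f A, simplified real_norm_def])
qed

lemma tail_bound:
  fixes h g :: "'b \<Rightarrow> real"
  assumes g: "g summable_on UNIV" and hg: "\<And>x. \<bar>h x\<bar> \<le> g x" and K: "finite K"
  shows "\<bar>infsum h UNIV - sum h K\<bar> \<le> infsum g UNIV - sum g K"
proof -
  have h: "h summable_on UNIV" using summable_by_bound[OF g] hg by auto
  have gK: "g summable_on (-K)" using g summable_on_subset by blast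
  have hK: "h summable_on (-K)" using h summable_on_subset by blast
  have U: "UNIV = K \<union> (-K)" by auto
  have eg: "infsum g UNIV = sum g K + infsum g (-K)"
    by (subst U, subst infsum_Un_disjoint) (use K gK in auto)
  have eh: "infsum h UNIV = sum h K + infsum h (-K)"
    by (subst U, subst infsum_Un_disjoint) (use K hK in auto)
  have lb: "- g x \<le> h x" and ub: "h x \<le> g x" for x using hg[of x] by linarith+
  have "infsum h (-K) \<le> infsum g (-K)" using ub by (intro infsum_mono hK gK)
  moreover have "infsum (\<lambda>x. - g x) (-K) \<le> infsum h (-K)" using lb
    by (intro infsum_mono hK) (auto intro: summable_on_uminus[THEN iffD2] gK)
  moreover have "infsum (\<lambda>x. - g x) (-K) = - infsum g (-K)" by (rule infsum_uminus)
  ultimately show ?thesis using eg eh by linarith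
qed

lemma infsum_dct:
  fixes F :: "nat \<Rightarrow> 'b \<Rightarrow> real"
  assumes g: "g summable_on UNIV" and bnd: "\<And>n y. \<bar>F n y\<bar> \<le> g y"
    and lim: "\<And>y. (\<lambda>n. F n y) \<longlonglongrightarrow> f y"
  shows "(\<lambda>n. infsum (F n) UNIV) \<longlonglongrightarrow> infsum f UNIV"
proof (rule LIMSEQ_I)
  fix e :: real assume e: "e > 0"
  have fb: "\<bar>f y\<bar> \<le> g y" for y
    using LIMSEQ_le_const2[OF tendsto_rabs[OF lim[of y]]] bnd by blast
  define d where "d = e / 4"
  have d: "d > 0" using e by (simp add: d_def)
  obtain K where K: "finite K" "dist (sum g K) (infsum g UNIV) \<le> d"
    using infsum_finite_approximation[OF g d] by blast
  have tl: "infsum g UNIV - sum g K \<le> d" using K(2) by (simp add: dist_real_def)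
  have "(\<lambda>n. sum (F n) K) \<longlonglongrightarrow> sum f K" by (intro tendsto_sum lim)
  then obtain N where N: "\<And>n. n \<ge> N \<Longrightarrow> norm (sum (F n) K - sum f K) < d"
    using LIMSEQ_D[OF _ d] by blast
  show "\<exists>N. \<forall>n\<ge>N. norm (infsum (F n) UNIV - infsum f UNIV) < e"
  proof (intro exI allI impI)
    fix n assume "n \<ge> N"
    have a1: "\<bar>infsum (F n) UNIV - sum (F n) K\<bar> \<le> d" using tail_bound[OF g bnd[of n] K(1)] tl by linarith
    have a2: "\<bar>infsum f UNIV - sum f K\<bar> \<le> d" using tail_bound[OF g fb K(1)] tl by linarith
    have a3: "\<bar>sum (F n) K - sum f K\<bar> < d" using N[OF \<open>n \<ge> N\<close>] by simp
    show "norm (infsum (F n) UNIV - infsum f UNIV) < e"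
      using a1 a2 a3 unfolding real_norm_def abs_le_iff abs_less_iff d_def
      by (intro conjI; linarith)
  qed
qed

locale pg =
  fixes b :: "'a \<Rightarrow> 'a \<Rightarrow> real" and m :: "'a \<Rightarrow> real" and p :: real
  assumes G: "weighted_graph b m (\<lambda>_. 0)" and p1: "1 < p"
begin

lemma b_sym: "b x y = b y x" using G unfolding weighted_graph_def by blast
lemma b_nn: "0 \<le> b x y" using G unfolding weighted_graph_def by blast
lemma b_diag[simp]: "b x x = 0" using G unfolding weighted_graph_def by blast
lemma b_row: "(\<lambda>y. b x y) summable_on UNIV" using G unfolding weighted_graph_def by blast
lemma m_pos: "0 < m x" using G unfolding weighted_graph_def by blast
lemma inf_UNIV: "infinite (UNIV :: 'a set)" using G unfolding weighted_graph_def by blast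
lemma conn: "(x, y) \<in> {(x, y). 0 < b x y}\<^sup>*" using G unfolding weighted_graph_def by blast

lemma closed_UNIV:
  assumes "a \<in> S" "\<And>x y. x \<in> S \<Longrightarrow> 0 < b x y \<Longrightarrow> y \<in> S" shows "S = UNIV"
proof -
  have "y \<in> S" for y
  proof -
    have "(a, y) \<in> {(x, y). 0 < b x y}\<^sup>*" by (rule conn)
    then show ?thesis
    proof (induction rule: rtrancl_induct)
      case base show ?case using assms(1) .
    next
      case (step y z) then show ?case using assms(2) by blast
    qed
  qed
  then show ?thesis by auto
qed

lemma ex_outside: "finite (A :: 'a set) \<Longrightarrow> \<exists>x. x \<notin> A"
  by (rule ex_new_if_finite[OF inf_UNIV])

lemma has_nbr: "\<exists>y. 0 < b x y"
proof -
  obtain z where "z \<notin> {x}" using ex_outside by blast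
  then have xz: "x \<noteq> z" by auto
  have "(x, z) \<in> {(x, y). 0 < b x y}\<^sup>*" by (rule conn)
  then show ?thesis
  proof (rule converse_rtranclE)
    assume "x = z" with xz show ?thesis by simp
  next
    fix y assume "(x, y) \<in> {(x, y). 0 < b x y}" then show ?thesis by blast
  qed
qed

lemma row_summable_bound:
  assumes "\<And>y. \<bar>f y\<bar> \<le> C * b x y" shows "f summable_on UNIV"
  by (rule summable_by_bound[where g="\<lambda>y. C * b x y"]) (auto intro: summable_on_cmult_right b_row assms)

lemma pair_summable:
  fixes f :: "'a \<times> 'a \<Rightarrow> real"
  assumes A: "finite A" and z: "\<And>x y. x \<notin> A \<Longrightarrow> y \<notin> A \<Longrightarrow> f (x, y) = 0"
    and bd: "\<And>x y. \<bar>f (x, y)\<bar> \<le> C * b x y"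
  shows "f summable_on UNIV"
proof -
  define g1 where "g1 = (\<lambda>(x, y). if x \<in> A then \<bar>C\<bar> * b x y else 0)"
  define g2 where "g2 = (\<lambda>(x, y). if y \<in> A then \<bar>C\<bar> * b x y else 0)"
  have s1A: "g1 summable_on (A \<times> UNIV)"
  proof (rule summable_on_SigmaI[where g="\<lambda>x. \<bar>C\<bar> * infsum (\<lambda>y. b x y) UNIV"])
    fix x assume "x \<in> A"
    then show "((\<lambda>y. g1 (x, y)) has_sum \<bar>C\<bar> * infsum (\<lambda>y. b x y) UNIV) UNIV"
      unfolding g1_def using b_row[of x] by (auto intro: has_sum_cmult_right)
  qed (use A b_nn in \<open>auto simp: g1_def\<close>)
  have s1: "g1 summable_on UNIV"
    using s1A by (subst (asm) summable_on_cong_neutral[where T=UNIV and g=g1]) (auto simp: g1_def split: if_splits)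
  have "(\<lambda>(x, y). g1 (y, x)) summable_on (UNIV \<times> A)"
    using s1A summable_on_swap by blast
  moreover have "(\<lambda>(x, y). g1 (y, x)) = g2"
    by (auto simp: g1_def g2_def fun_eq_iff b_sym)
  ultimately have s2A: "g2 summable_on (UNIV \<times> A)" by simp
  have s2: "g2 summable_on UNIV"
    using s2A by (subst (asm) summable_on_cong_neutral[where T=UNIV and g=g2]) (auto simp: g2_def split: if_splits)
  have "(\<lambda>z. g1 z + g2 z) summable_on UNIV" using s1 s2 by (rule summable_on_add)
  moreover have "\<bar>f z\<bar> \<le> g1 z + g2 z" for z
  proof -
    obtain x y where zz: "z = (x, y)" by force
    have "C * b x y \<le> \<bar>C\<bar> * b x y" using b_nn[of x y] by (intro mult_right_mono) auto
    moreover have "0 \<le> \<bar>C\<bar> * b x y" using b_nn[of x y] by simp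
    moreover have "\<bar>f (x, y)\<bar> \<le> C * b x y" by (rule bd)
    moreover have "x \<notin> A \<Longrightarrow> y \<notin> A \<Longrightarrow> f (x, y) = 0" by (rule z)
    ultimately show ?thesis unfolding zz g1_def g2_def
      by (cases "x \<in> A"; cases "y \<in> A") simp_all
  qed
  ultimately show ?thesis by (rule summable_by_bound)
qed

end

lemma summable_on_diff':
  fixes f g :: "'b \<Rightarrow> real"
  assumes "f summable_on A" "g summable_on A" shows "(\<lambda>x. f x - g x) summable_on A"
proof -
  have "(\<lambda>x. - g x) summable_on A" using assms(2) by (simp add: summable_on_uminus)
  then have "(\<lambda>x. f x + - g x) summable_on A" using assms(1) by (intro summable_on_add)
  then show ?thesis by simp
qed

lemma infsum_diff':
  fixes f g :: "'b \<Rightarrow> real"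
  assumes "f summable_on A" "g summable_on A" shows "infsum (\<lambda>x. f x - g x) A = infsum f A - infsum g A"
proof -
  have m: "(\<lambda>x. - g x) summable_on A" using assms(2) by (simp add: summable_on_uminus)
  have "infsum (\<lambda>x. f x + - g x) A = infsum f A + infsum (\<lambda>x. - g x) A"
    by (rule infsum_add[OF assms(1) m])
  then show ?thesis by (simp add: infsum_uminus)
qed

definition lsum :: "('a \<Rightarrow> 'a \<Rightarrow> real) \<Rightarrow> real \<Rightarrow> ('a \<Rightarrow> real) \<Rightarrow> 'a \<Rightarrow> real" where
  "lsum b p f x = (\<Sum>\<^sub>\<infinity>y. b x y * spow (p - 1) (f x - f y))"

context pg begin

lemma plap_eq: "plap b m p f x = lsum b p f x / m x"
  by (simp add: plap_def lsum_def)

lemma term_bound: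
  assumes "\<And>x. \<bar>f x\<bar> \<le> M"
  shows "\<bar>b x y * spow (p - 1) (f x - f y)\<bar> \<le> (2 * M) powr (p - 1) * b x y"
proof -
  have "\<bar>f x - f y\<bar> \<le> 2 * M" using assms[of x] assms[of y] by linarith
  then have "\<bar>spow (p - 1) (f x - f y)\<bar> \<le> (2 * M) powr (p - 1)"
    using p1 by (intro abs_spow_le) auto
  then show ?thesis using b_nn[of x y]
    by (simp add: abs_mult mult.commute mult_left_mono)
qed

lemma Fp_bounded:
  assumes "\<And>x. \<bar>f x\<bar> \<le> M" shows "f \<in> Fp b p"
  unfolding Fp_def
proof (intro CollectI allI)
  fix x
  show "(\<lambda>y. b x y * \<bar>f x - f y\<bar> powr (p - 1)) summable_on UNIV"
  proof (rule row_summable_bound)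
    fix y
    have "\<bar>b x y * \<bar>f x - f y\<bar> powr (p - 1)\<bar> = \<bar>b x y * spow (p - 1) (f x - f y)\<bar>"
      using b_nn[of x y] by (simp add: abs_mult abs_spow)
    then show "\<bar>b x y * \<bar>f x - f y\<bar> powr (p - 1)\<bar> \<le> (2 * M) powr (p - 1) * b x y"
      using term_bound[OF assms] by simp
  qed
qed

lemma lsum_summable:
  assumes "f \<in> Fp b p" shows "(\<lambda>y. b x y * spow (p - 1) (f x - f y)) summable_on UNIV"
proof (rule summable_by_bound)
  show "(\<lambda>y. b x y * \<bar>f x - f y\<bar> powr (p - 1)) summable_on UNIV" using assms by (simp add: Fp_def)
  show "\<bar>b x y * spow (p - 1) (f x - f y)\<bar> \<le> b x y * \<bar>f x - f y\<bar> powr (p - 1)" for y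
    using b_nn[of x y] by (simp add: abs_mult abs_spow)
qed

lemma lsum_dct:
  assumes bd: "\<And>n x. \<bar>F n x\<bar> \<le> M" and lim: "\<And>x. (\<lambda>n. F n x) \<longlonglongrightarrow> f x"
  shows "(\<lambda>n. lsum b p (F n) x) \<longlonglongrightarrow> lsum b p f x"
  unfolding lsum_def
proof (rule infsum_dct)
  show "(\<lambda>y. (2 * M) powr (p - 1) * b x y) summable_on UNIV"
    by (intro summable_on_cmult_right b_row)
  show "\<bar>b x y * spow (p - 1) (F n x - F n y)\<bar> \<le> (2 * M) powr (p - 1) * b x y" for n y
    using term_bound[of "F n" M x y] bd by blast
  show "(\<lambda>n. b x y * spow (p - 1) (F n x - F n y)) \<longlonglongrightarrow> b x y * spow (p - 1) (f x - f y)" for y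
    using p1 by (intro tendsto_mult tendsto_const tendsto_spow tendsto_diff lim) auto
qed

lemma lsum_const: "lsum b p (\<lambda>_. k) x = 0"
  by (simp add: lsum_def)

lemma lsum_affine:
  assumes "c \<ge> 0" shows "lsum b p (\<lambda>x. e + c * f x) x = c powr (p - 1) * lsum b p f x"
proof -
  have "b x y * spow (p - 1) ((e + c * f x) - (e + c * f y)) = c powr (p - 1) * (b x y * spow (p - 1) (f x - f y))" for y
    using spow_scale[OF assms, of "p - 1" "f x - f y"] by (simp add: algebra_simps)
  then have "lsum b p (\<lambda>x. e + c * f x) x = (\<Sum>\<^sub>\<infinity>y. c powr (p - 1) * (b x y * spow (p - 1) (f x - f y)))"
    unfolding lsum_def by (intro infsum_cong) simp
  also have "\<dots> = c powr (p - 1) * lsum b p f x" unfolding lsum_def by (rule infsum_cmult_right')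
  finally show ?thesis .
qed

lemma lsum_scale:
  assumes "c \<ge> 0" shows "lsum b p (\<lambda>x. c * f x) x = c powr (p - 1) * lsum b p f x"
  using lsum_affine[OF assms, of 0 f x] by simp

lemma comparison:
  assumes U: "finite U" and f: "f \<in> Fp b p" and g: "g \<in> Fp b p"
    and le: "\<And>x. x \<in> U \<Longrightarrow> lsum b p f x \<le> lsum b p g x"
    and out: "\<And>x. x \<notin> U \<Longrightarrow> f x \<le> g x"
  shows "f x \<le> g x"
proof (rule ccontr)
  assume "\<not> f x \<le> g x"
  define D where "D = (\<lambda>x. f x - g x)"
  have xU: "x \<in> U" using out \<open>\<not> f x \<le> g x\<close> by blast
  define M where "M = Max (D ` U)"
  have DM: "D w \<le> M" if "w \<in> U" for w using U that by (simp add: M_def)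
  have Mpos: "M > 0" using DM[OF xU] \<open>\<not> f x \<le> g x\<close> by (simp add: D_def)
  have Dall: "D w \<le> M" for w
    using DM out[of w] Mpos by (cases "w \<in> U") (auto simp: D_def)
  define S where "S = {w \<in> U. D w = M}"
  obtain a where aS: "a \<in> S"
  proof -
    have "M \<in> D ` U" unfolding M_def using U xU by (intro Max_in) auto
    then show ?thesis using that by (auto simp: S_def)
  qed
  have closed: "y \<in> S" if zS: "z \<in> S" and bz: "0 < b z y" for z y
  proof -
    have zU: "z \<in> U" and Dz: "D z = M" using zS by (auto simp: S_def)
    define t where "t = (\<lambda>w. b z w * spow (p - 1) (f z - f w) - b z w * spow (p - 1) (g z - g w))"
    have tnn: "t w \<ge> 0" for w
    proof -
      have "g z - g w \<le> f z - f w" using Dall[of w] Dz by (simp add: D_def)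
      then have "spow (p - 1) (g z - g w) \<le> spow (p - 1) (f z - f w)" using p1 by (intro spow_mono) auto
      then show ?thesis unfolding t_def using b_nn[of z w]
        by (simp add: mult_left_mono flip: right_diff_distrib)
    qed
    have ts: "t summable_on UNIV" unfolding t_def
      by (intro summable_on_diff' lsum_summable f g)
    have "infsum t UNIV = lsum b p f z - lsum b p g z"
      unfolding t_def lsum_def by (intro infsum_diff' lsum_summable f g)
    then have "infsum t UNIV \<le> 0" using le[OF zU] by simp
    then have "t y = 0" using nonneg_infsum_le_0D[OF _ ts tnn] by blast
    then have "spow (p - 1) (f z - f y) = spow (p - 1) (g z - g y)"
      using bz by (simp add: t_def flip: right_diff_distrib)
    then have "f z - f y = g z - g y" using p1 spow_eq_iff[of "p - 1"] by auto
    then have "D y = M" using Dz by (simp add: D_def)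
    moreover have "y \<in> U" using out[of y] \<open>D y = M\<close> Mpos by (auto simp: D_def)
    ultimately show ?thesis by (simp add: S_def)
  qed
  have "S = UNIV" by (rule closed_UNIV[OF aS closed]) auto
  then have "UNIV \<subseteq> U" by (auto simp: S_def)
  then show False using U inf_UNIV finite_subset by blast
qed

lemma pos_principle:
  assumes f: "f \<in> Fp b p" and nn: "\<And>x. 0 \<le> f x" and a: "0 < f a"
    and sup: "\<And>x. x \<noteq> a \<Longrightarrow> 0 \<le> lsum b p f x"
  shows "0 < f x"
proof (rule ccontr)
  assume "\<not> 0 < f x"
  then have x0: "f x = 0" using nn[of x] by simp
  define Z where "Z = {x. f x = 0}"
  have closed: "y \<in> Z" if zZ: "z \<in> Z" and bz: "0 < b z y" for z y
  proof -
    have fz: "f z = 0" using zZ by (simp add: Z_def)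
    then have za: "z \<noteq> a" using a by auto
    define t where "t = (\<lambda>w. - (b z w * spow (p - 1) (f z - f w)))"
    have tnn: "t w \<ge> 0" for w
    proof -
      have "spow (p - 1) (f z - f w) \<le> 0" using fz nn[of w] by (simp add: spow_nonpos_iff)
      then show ?thesis unfolding t_def using b_nn[of z w] by (simp add: mult_nonneg_nonpos)
    qed
    have ts: "t summable_on UNIV" unfolding t_def
      using lsum_summable[OF f, of z] by (simp add: summable_on_uminus)
    have "infsum t UNIV = - lsum b p f z"
      unfolding t_def lsum_def by (simp add: infsum_uminus)
    then have "infsum t UNIV \<le> 0" using sup[OF za] by simp
    then have "t y = 0" using nonneg_infsum_le_0D[OF _ ts tnn] by blast
    then have "spow (p - 1) (f z - f y) = 0" using bz by (simp add: t_def)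
    then show ?thesis using fz by (simp add: spow_zero_iff Z_def)
  qed
  have "Z = UNIV" by (rule closed_UNIV[of x]) (use x0 closed in \<open>auto simp: Z_def\<close>)
  then have "a \<in> Z" by simp
  then show False using a by (simp add: Z_def)
qed

lemma green_formula:
  assumes bd: "\<And>x. \<bar>f x\<bar> \<le> M" and A: "finite A" and psi: "\<And>x. x \<notin> A \<Longrightarrow> \<psi> x = 0"
  shows "(\<Sum>\<^sub>\<infinity>(x, y). b x y * spow (p - 1) (f x - f y) * (\<psi> x - \<psi> y))
           = 2 * (\<Sum>x\<in>A. \<psi> x * lsum b p f x)"
proof -
  define T where "T = (\<lambda>x y. b x y * spow (p - 1) (f x - f y))"
  define K where "K = (2 * M) powr (p - 1)"
  define Q where "Q = (\<Sum>x\<in>A. \<bar>\<psi> x\<bar>)"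
  have Tb: "\<bar>T x y\<bar> \<le> K * b x y" for x y unfolding T_def K_def by (rule term_bound[OF bd])
  have psib: "\<bar>\<psi> x\<bar> \<le> Q" for x
  proof (cases "x \<in> A")
    case True then show ?thesis unfolding Q_def using A by (intro member_le_sum) auto
  next
    case False then show ?thesis using psi[of x] by (simp add: Q_def sum_nonneg)
  qed
  have Q0: "Q \<ge> 0" unfolding Q_def by (simp add: sum_nonneg)
  have Tanti: "T y x = - T x y" for x y
  proof -
    have "spow (p - 1) (f y - f x) = - spow (p - 1) (f x - f y)"
      using spow_neg[of "p - 1" "f x - f y"] by simp
    then show ?thesis unfolding T_def by (simp add: b_sym[of y x])
  qed
  define P1 where "P1 = (\<lambda>(x, y). T x y * \<psi> x)"
  define P2 where "P2 = (\<lambda>(x, y). T x y * \<psi> y)"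
  have Pb: "\<bar>T x y * \<psi> z\<bar> \<le> (K * Q) * b x y" for x y z
  proof -
    have "\<bar>T x y * \<psi> z\<bar> = \<bar>T x y\<bar> * \<bar>\<psi> z\<bar>" by (simp add: abs_mult)
    also have "\<dots> \<le> (K * b x y) * Q" using Tb[of x y] psib[of z] Q0
      by (intro mult_mono) auto
    finally show ?thesis by (simp add: algebra_simps)
  qed
  have s1: "P1 summable_on UNIV"
    by (rule pair_summable[OF A, where C="K * Q"]) (use psi Pb in \<open>auto simp: P1_def\<close>)
  have s2: "P2 summable_on UNIV"
    by (rule pair_summable[OF A, where C="K * Q"]) (use psi Pb in \<open>auto simp: P2_def\<close>)
  have e0: "(\<Sum>\<^sub>\<infinity>(x, y). b x y * spow (p - 1) (f x - f y) * (\<psi> x - \<psi> y)) = infsum (\<lambda>z. P1 z - P2 z) UNIV"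
    by (rule infsum_cong) (auto simp: P1_def P2_def T_def algebra_simps)
  have e1: "infsum (\<lambda>z. P1 z - P2 z) UNIV = infsum P1 UNIV - infsum P2 UNIV"
    by (rule infsum_diff'[OF s1 s2])
  have bij: "bij_betw prod.swap (UNIV :: ('a \<times> 'a) set) UNIV"
    by (simp add: bij_betw_def)
  have e2: "infsum P2 UNIV = infsum (\<lambda>z. P2 (prod.swap z)) UNIV"
    by (rule infsum_reindex_bij_betw[OF bij, symmetric])
  have e3: "(\<lambda>z. P2 (prod.swap z)) = (\<lambda>z. - P1 z)"
  proof (rule ext)
    fix z :: "'a \<times> 'a"
    obtain x y where z: "z = (x, y)" by force
    show "P2 (prod.swap z) = - P1 z" unfolding z P1_def P2_def using Tanti[of x y] by simp
  qed
  have e4: "infsum P1 UNIV = infsum P1 (A \<times> UNIV)"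
    by (rule infsum_cong_neutral) (use psi in \<open>auto simp: P1_def\<close>, metis psi)
  have s1A: "P1 summable_on (A \<times> UNIV)" using s1 summable_on_subset by blast
  have e5: "infsum P1 (A \<times> UNIV) = infsum (\<lambda>x. infsum (\<lambda>y. P1 (x, y)) UNIV) A"
    using infsum_Sigma_banach[of P1 A "\<lambda>_. UNIV"] s1A by simp
  have e6: "infsum (\<lambda>y. P1 (x, y)) UNIV = \<psi> x * lsum b p f x" for x
    unfolding P1_def lsum_def T_def by (simp add: mult.commute[of _ "\<psi> x"] infsum_cmult_right')
  show ?thesis
    using e0 e1 e2 e3 e4 e5 e6 A by (simp add: infsum_uminus)
qed

end

definition Hs :: "('a \<Rightarrow> 'a \<Rightarrow> real) \<Rightarrow> real \<Rightarrow> 'a \<Rightarrow> real \<Rightarrow> ('a \<Rightarrow> real) \<Rightarrow> real" where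
  "Hs b p x t w = (\<Sum>\<^sub>\<infinity>y. b x y * spow (p - 1) (t - w y))"

context pg begin

lemma energy0: "energy b (\<lambda>_. 0) p f = (1/2) * (\<Sum>\<^sub>\<infinity>(x, y). b x y * \<bar>f x - f y\<bar> powr p)"
  by (simp add: energy_def)

lemma pw_nonneg: "0 \<le> b x y * \<bar>f x - f y\<bar> powr p"
  using b_nn by simp

lemma energy_nonneg: "0 \<le> energy b (\<lambda>_. 0) p f"
  unfolding energy0 using pw_nonneg by (auto intro!: infsum_nonneg)

lemma fs_bounded:
  fixes f :: "'b \<Rightarrow> real"
  assumes "finite A" "\<And>x. x \<notin> A \<Longrightarrow> f x = 0" shows "\<bar>f x\<bar> \<le> (\<Sum>x\<in>A. \<bar>f x\<bar>)"
proof (cases "x \<in> A")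
  case True then show ?thesis using assms(1) by (intro member_le_sum[where f="\<lambda>x. \<bar>f x\<bar>"]) auto
next
  case False then show ?thesis using assms by (simp add: sum_nonneg)
qed

lemma pw_summable:
  assumes A: "finite A" and z: "\<And>x. x \<notin> A \<Longrightarrow> f x = 0" and bd: "\<And>x. \<bar>f x\<bar> \<le> M"
  shows "(\<lambda>(x, y). b x y * \<bar>f x - f y\<bar> powr p) summable_on UNIV"
proof (rule pair_summable[OF A, where C="(2 * M) powr p"])
  fix x y
  have "\<bar>f x - f y\<bar> \<le> 2 * M" using bd[of x] bd[of y] by linarith
  then have "\<bar>f x - f y\<bar> powr p \<le> (2 * M) powr p" using p1 by (intro powr_mono2) auto
  then show "\<bar>(case (x, y) of (x, y) \<Rightarrow> b x y * \<bar>f x - f y\<bar> powr p)\<bar> \<le> (2 * M) powr p * b x y"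
    using b_nn[of x y] by (simp add: mult.commute mult_left_mono)
qed (use z in auto)

lemma cross_summable:
  assumes bd: "\<And>x. \<bar>f x\<bar> \<le> M" and A: "finite A" and psi: "\<And>x. x \<notin> A \<Longrightarrow> \<psi> x = 0"
  shows "(\<lambda>(x, y). b x y * spow (p - 1) (f x - f y) * (\<psi> x - \<psi> y)) summable_on UNIV"
proof -
  define Q where "Q = (\<Sum>x\<in>A. \<bar>\<psi> x\<bar>)"
  have psib: "\<bar>\<psi> x\<bar> \<le> Q" for x unfolding Q_def by (rule fs_bounded[OF A psi])
  show ?thesis
  proof (rule pair_summable[OF A, where C="(2 * M) powr (p - 1) * (2 * Q)"])
    fix x y
    have "\<bar>\<psi> x - \<psi> y\<bar> \<le> 2 * Q" using psib[of x] psib[of y] by linarith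
    have "\<bar>case (x, y) of (x, y) \<Rightarrow> b x y * spow (p - 1) (f x - f y) * (\<psi> x - \<psi> y)\<bar>
        = \<bar>b x y * spow (p - 1) (f x - f y)\<bar> * \<bar>\<psi> x - \<psi> y\<bar>" by (simp add: abs_mult)
    also have "\<dots> \<le> ((2 * M) powr (p - 1) * b x y) * (2 * Q)"
      using term_bound[of f M x y, OF bd] b_nn[of x y] \<open>\<bar>\<psi> x - \<psi> y\<bar> \<le> 2 * Q\<close> by (intro mult_mono) auto
    also have "\<dots> = (2 * M) powr (p - 1) * (2 * Q) * b x y" by (simp add: mult_ac)
    finally show "\<bar>case (x, y) of (x, y) \<Rightarrow> b x y * spow (p - 1) (f x - f y) * (\<psi> x - \<psi> y)\<bar>
              \<le> (2 * M) powr (p - 1) * (2 * Q) * b x y" .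
  qed (use psi in auto)
qed

lemma cap_lower:
  assumes "finite {x. \<phi> x \<noteq> 0}" "\<And>x. x \<notin> V \<Longrightarrow> \<phi> x = 0" "\<And>x. x \<in> K \<Longrightarrow> 1 \<le> \<phi> x"
  shows "cap b (\<lambda>_. 0) p K V \<le> energy b (\<lambda>_. 0) p \<phi>"
  unfolding cap_def
proof (rule cInf_lower)
  show "energy b (\<lambda>_. 0) p \<phi> \<in> {energy b (\<lambda>_. 0) p \<phi> |\<phi>. finite {x. \<phi> x \<noteq> 0} \<and> (\<forall>x. x \<notin> V \<longrightarrow> \<phi> x = 0) \<and> (\<forall>x\<in>K. 1 \<le> \<phi> x)}"
    using assms by blast
  show "bdd_below {energy b (\<lambda>_. 0) p \<phi> |\<phi>. finite {x. \<phi> x \<noteq> 0} \<and> (\<forall>x. x \<notin> V \<longrightarrow> \<phi> x = 0) \<and> (\<forall>x\<in>K. 1 \<le> \<phi> x)}"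
    unfolding bdd_below_def
    apply (rule exI[of _ 0])
    apply clarify
    apply (rule energy_nonneg)
    done
qed

lemma cap_greatest:
  fixes \<phi>0 :: "'a \<Rightarrow> real"
  assumes "finite {x. \<phi>0 x \<noteq> 0}" "\<And>x. x \<notin> V \<Longrightarrow> \<phi>0 x = 0" "\<And>x. x \<in> K \<Longrightarrow> 1 \<le> \<phi>0 x"
    and "\<And>\<phi>. finite {x. \<phi> x \<noteq> 0} \<Longrightarrow> (\<And>x. x \<notin> V \<Longrightarrow> \<phi> x = 0) \<Longrightarrow> (\<And>x. x \<in> K \<Longrightarrow> 1 \<le> \<phi> x)
            \<Longrightarrow> c \<le> energy b (\<lambda>_. 0) p \<phi>"
  shows "c \<le> cap b (\<lambda>_. 0) p K V"
  unfolding cap_def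
proof (rule cInf_greatest)
  have "energy b (\<lambda>_. 0) p \<phi>0 \<in> {energy b (\<lambda>_. 0) p \<phi> |\<phi>. finite {x. \<phi> x \<noteq> 0} \<and> (\<forall>x. x \<notin> V \<longrightarrow> \<phi> x = 0) \<and> (\<forall>x\<in>K. 1 \<le> \<phi> x)}"
    apply (rule CollectI)
    apply (rule exI[of _ \<phi>0])
    using assms(1-3) by auto
  then show "{energy b (\<lambda>_. 0) p \<phi> |\<phi>. finite {x. \<phi> x \<noteq> 0} \<and> (\<forall>x. x \<notin> V \<longrightarrow> \<phi> x = 0) \<and> (\<forall>x\<in>K. 1 \<le> \<phi> x)} \<noteq> {}"
    by (rule ex_in_conv[THEN iffD1, OF exI])
  fix y assume "y \<in> {energy b (\<lambda>_. 0) p \<phi> |\<phi>. finite {x. \<phi> x \<noteq> 0} \<and> (\<forall>x. x \<notin> V \<longrightarrow> \<phi> x = 0) \<and> (\<forall>x\<in>K. 1 \<le> \<phi> x)}"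
  then obtain \<phi> where e: "y = energy b (\<lambda>_. 0) p \<phi>" and h: "finite {x. \<phi> x \<noteq> 0}" "\<forall>x. x \<notin> V \<longrightarrow> \<phi> x = 0" "\<forall>x\<in>K. 1 \<le> \<phi> x"
    by (auto simp only: mem_Collect_eq)
  have "c \<le> energy b (\<lambda>_. 0) p \<phi>" by (rule assms(4)) (use h in auto)
  then show "c \<le> y" using e by simp
qed

lemma harmonic_min:
  assumes V: "finite V" and x0: "x0 \<in> V"
    and v1: "v x0 = 1" and vout: "\<And>x. x \<notin> V \<Longrightarrow> v x = 0" and vb: "\<And>x. 0 \<le> v x \<and> v x \<le> 1"
    and vh: "\<And>x. x \<in> V - {x0} \<Longrightarrow> lsum b p v x = 0"
    and phf: "finite {x. \<phi> x \<noteq> 0}" and phout: "\<And>x. x \<notin> V \<Longrightarrow> \<phi> x = 0" and ph1: "1 \<le> \<phi> x0"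
  shows "energy b (\<lambda>_. 0) p v \<le> energy b (\<lambda>_. 0) p \<phi>"
proof -
  define Mp where "Mp = (\<Sum>x\<in>V. \<bar>\<phi> x\<bar>)"
  have phb: "\<bar>\<phi> x\<bar> \<le> Mp" for x unfolding Mp_def by (rule fs_bounded[OF V phout])
  have vbd: "\<bar>v x\<bar> \<le> 1" for x using vb[of x] by simp
  define psi where "psi = (\<lambda>x. \<phi> x - v x)"
  have psiout: "psi x = 0" if "x \<notin> V" for x using that phout vout by (simp add: psi_def)
  define C where "C = (\<lambda>(x, y). b x y * spow (p - 1) (v x - v y) * (psi x - psi y))"
  have sphi: "(\<lambda>(x, y). b x y * \<bar>\<phi> x - \<phi> y\<bar> powr p) summable_on UNIV"
    by (rule pw_summable[OF V phout phb])
  have sv: "(\<lambda>(x, y). b x y * \<bar>v x - v y\<bar> powr p) summable_on UNIV"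
    by (rule pw_summable[OF V vout vbd])
  have sC: "C summable_on UNIV" unfolding C_def by (rule cross_summable[OF vbd V psiout])
  have pt: "b x y * \<bar>v x - v y\<bar> powr p + p * C (x, y) \<le> b x y * \<bar>\<phi> x - \<phi> y\<bar> powr p" for x y
  proof -
    have "\<bar>v x - v y\<bar> powr p + p * spow (p - 1) (v x - v y) * ((\<phi> x - \<phi> y) - (v x - v y))
           \<le> \<bar>\<phi> x - \<phi> y\<bar> powr p" by (rule convex_ineq[OF p1])
    then have "b x y * (\<bar>v x - v y\<bar> powr p + p * spow (p - 1) (v x - v y) * ((\<phi> x - \<phi> y) - (v x - v y)))
           \<le> b x y * \<bar>\<phi> x - \<phi> y\<bar> powr p" using b_nn by (intro mult_left_mono) auto
    then show ?thesis unfolding C_def psi_def by (simp add: algebra_simps)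
  qed
  have sum2: "(\<lambda>z. (case z of (x, y) \<Rightarrow> b x y * \<bar>v x - v y\<bar> powr p) + p * C z) summable_on UNIV"
    by (intro summable_on_add sv summable_on_cmult_right sC)
  have "infsum (\<lambda>z. (case z of (x, y) \<Rightarrow> b x y * \<bar>v x - v y\<bar> powr p) + p * C z) UNIV
        \<le> (\<Sum>\<^sub>\<infinity>(x, y). b x y * \<bar>\<phi> x - \<phi> y\<bar> powr p)"
    by (rule infsum_mono[OF sum2 sphi]) (use pt in auto)
  moreover have "infsum (\<lambda>z. (case z of (x, y) \<Rightarrow> b x y * \<bar>v x - v y\<bar> powr p) + p * C z) UNIV
        = (\<Sum>\<^sub>\<infinity>(x, y). b x y * \<bar>v x - v y\<bar> powr p) + p * infsum C UNIV"
    by (subst infsum_add[OF sv]) (auto intro: summable_on_cmult_right sC simp: infsum_cmult_right')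
  moreover have "infsum C UNIV = 2 * (\<Sum>x\<in>V. psi x * lsum b p v x)"
    unfolding C_def by (rule green_formula[OF vbd V psiout])
  moreover have "(\<Sum>x\<in>V. psi x * lsum b p v x) = psi x0 * lsum b p v x0"
  proof -
    have "(\<Sum>x\<in>V. psi x * lsum b p v x) = psi x0 * lsum b p v x0 + (\<Sum>x\<in>V - {x0}. psi x * lsum b p v x)"
      using V x0 by (simp add: sum.remove)
    also have "(\<Sum>x\<in>V - {x0}. psi x * lsum b p v x) = 0" using vh by simp
    finally show ?thesis by simp
  qed
  moreover have "psi x0 * lsum b p v x0 \<ge> 0"
  proof -
    have "lsum b p v x0 \<ge> 0" unfolding lsum_def
      using v1 vb b_nn by (intro infsum_nonneg mult_nonneg_nonneg) (auto simp: spow_nonneg_iff)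
    moreover have "psi x0 \<ge> 0" using ph1 v1 by (simp add: psi_def)
    ultimately show ?thesis by simp
  qed
  ultimately have "(\<Sum>\<^sub>\<infinity>(x, y). b x y * \<bar>v x - v y\<bar> powr p) \<le> (\<Sum>\<^sub>\<infinity>(x, y). b x y * \<bar>\<phi> x - \<phi> y\<bar> powr p)"
    using p1 by (smt (z3) mult_nonneg_nonneg)
  then show ?thesis unfolding energy0 by simp
qed

lemma harmonic_is_sol:
  assumes V: "finite V" and x0: "x0 \<in> V"
    and v1: "v x0 = 1" and vout: "\<And>x. x \<notin> V \<Longrightarrow> v x = 0" and vb: "\<And>x. 0 \<le> v x \<and> v x \<le> 1"
    and vh: "\<And>x. x \<in> V - {x0} \<Longrightarrow> lsum b p v x = 0"
  shows "dirichlet_sol b m (\<lambda>_. 0) p x0 V v"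
proof -
  have vbd: "\<bar>v x\<bar> \<le> 1" for x using vb[of x] by simp
  have fin: "finite {x. v x \<noteq> 0}" using V vout by (metis (mono_tags) finite_subset mem_Collect_eq subsetI)
  have "energy b (\<lambda>_. 0) p v = cap b (\<lambda>_. 0) p {x0} V"
  proof (rule antisym)
    show "energy b (\<lambda>_. 0) p v \<le> cap b (\<lambda>_. 0) p {x0} V"
      by (rule cap_greatest[of v]) (use fin vout v1 harmonic_min[OF V x0 v1 vout vb vh] in auto)
    show "cap b (\<lambda>_. 0) p {x0} V \<le> energy b (\<lambda>_. 0) p v"
      by (rule cap_lower) (use fin vout v1 in auto)
  qed
  then show ?thesis unfolding dirichlet_sol_def
    using Fp_bounded[OF vbd] vh v1 vout by (auto simp: plap_eq)
qed

end

definition Tst :: "('a \<Rightarrow> 'a \<Rightarrow> real) \<Rightarrow> real \<Rightarrow> 'a set \<Rightarrow> 'a \<Rightarrow> ('a \<Rightarrow> real) \<Rightarrow> 'a \<Rightarrow> real" where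
  "Tst b p V x0 w = (\<lambda>x. if x \<in> V - {x0} then (THE t. t \<in> {0..1} \<and> Hs b p x t w = 0) else w x)"

definition Wset :: "'a set \<Rightarrow> 'a \<Rightarrow> ('a \<Rightarrow> real) set" where
  "Wset V x0 = {w. w x0 = 1 \<and> (\<forall>y. y \<notin> V \<longrightarrow> w y = 0) \<and> (\<forall>y. 0 \<le> w y \<and> w y \<le> 1)}"

context pg begin

lemma Hs_term_bound:
  assumes "0 \<le> t" "t \<le> 1" "0 \<le> w y" "w y \<le> 1"
  shows "\<bar>b x y * spow (p - 1) (t - w y)\<bar> \<le> b x y"
proof -
  have "\<bar>spow (p - 1) (t - w y)\<bar> \<le> 1" using assms p1 by (intro abs_spow_le1) auto
  then show ?thesis using b_nn[of x y] by (simp add: abs_mult mult_left_le)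
qed

lemma Hs_summable:
  assumes "0 \<le> t" "t \<le> 1" "\<And>y. 0 \<le> w y \<and> w y \<le> 1"
  shows "(\<lambda>y. b x y * spow (p - 1) (t - w y)) summable_on UNIV"
proof (rule row_summable_bound[where C=1 and x=x])
  fix y show "\<bar>b x y * spow (p - 1) (t - w y)\<bar> \<le> 1 * b x y"
    using Hs_term_bound[of t w y x] assms by simp
qed

lemma Hs_strict:
  assumes "0 \<le> t" "t < t'" "t' \<le> 1" "\<And>y. 0 \<le> w y \<and> w y \<le> 1"
  shows "Hs b p x t w < Hs b p x t' w"
proof -
  obtain y0 where y0: "0 < b x y0" using has_nbr by blast
  have s1: "((\<lambda>y. b x y * spow (p - 1) (t - w y)) has_sum Hs b p x t w) UNIV"
    unfolding Hs_def using Hs_summable[of t w x] assms by (intro has_sum_infsum) auto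
  have s2: "((\<lambda>y. b x y * spow (p - 1) (t' - w y)) has_sum Hs b p x t' w) UNIV"
    unfolding Hs_def using Hs_summable[of t' w x] assms by (intro has_sum_infsum) auto
  show ?thesis
  proof (rule has_sum_strict_mono[OF s1 s2])
    fix y
    show "b x y * spow (p - 1) (t - w y) \<le> b x y * spow (p - 1) (t' - w y)"
      using assms p1 b_nn[of x y] by (intro mult_left_mono spow_mono) auto
  next
    show "b x y0 * spow (p - 1) (t - w y0) < b x y0 * spow (p - 1) (t' - w y0)"
      using assms p1 y0 by (intro mult_strict_left_mono spow_strict_mono) auto
  qed auto
qed

lemma Hs_anti:
  assumes "0 \<le> t" "t \<le> 1" "\<And>y. 0 \<le> w y \<and> w y \<le> 1" "\<And>y. 0 \<le> w' y \<and> w' y \<le> 1"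
    and "\<And>y. w y \<le> w' y"
  shows "Hs b p x t w' \<le> Hs b p x t w"
  unfolding Hs_def
proof (rule infsum_mono)
  show "(\<lambda>y. b x y * spow (p - 1) (t - w' y)) summable_on UNIV" using Hs_summable assms by blast
  show "(\<lambda>y. b x y * spow (p - 1) (t - w y)) summable_on UNIV" using Hs_summable assms by blast
  fix y show "b x y * spow (p - 1) (t - w' y) \<le> b x y * spow (p - 1) (t - w y)"
    using assms p1 b_nn[of x y] by (intro mult_left_mono spow_mono) auto
qed

lemma Hs_0:
  assumes "\<And>y. 0 \<le> w y \<and> w y \<le> 1" shows "Hs b p x 0 w \<le> 0"
proof -
  have "Hs b p x 0 w \<le> infsum (\<lambda>_::'a. 0::real) UNIV"
    unfolding Hs_def
  proof (rule infsum_mono)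
    show "(\<lambda>y. b x y * spow (p - 1) (0 - w y)) summable_on UNIV" using Hs_summable[of 0 w x] assms by simp
    fix y show "b x y * spow (p - 1) (0 - w y) \<le> 0"
      using assms[of y] b_nn[of x y] by (intro mult_nonneg_nonpos) (auto simp: spow_nonpos_iff)
  qed auto
  then show ?thesis by simp
qed

lemma Hs_1:
  assumes "\<And>y. 0 \<le> w y \<and> w y \<le> 1" shows "0 \<le> Hs b p x 1 w"
  unfolding Hs_def using assms b_nn
  by (intro infsum_nonneg mult_nonneg_nonneg) (auto simp: spow_nonneg_iff)

lemma Hs_lim:
  assumes t: "\<And>k. 0 \<le> tk k \<and> tk k \<le> 1" and w: "\<And>k y. 0 \<le> wk k y \<and> wk k y \<le> 1"
    and tl: "tk \<longlonglongrightarrow> t" and wl: "\<And>y. (\<lambda>k. wk k y) \<longlonglongrightarrow> w y"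
  shows "(\<lambda>k. Hs b p x (tk k) (wk k)) \<longlonglongrightarrow> Hs b p x t w"
  unfolding Hs_def
proof (rule infsum_dct)
  show "(\<lambda>y. b x y) summable_on UNIV" by (rule b_row)
  show "\<bar>b x y * spow (p - 1) (tk n - wk n y)\<bar> \<le> b x y" for n y
    using Hs_term_bound t w by blast
  show "(\<lambda>n. b x y * spow (p - 1) (tk n - wk n y)) \<longlonglongrightarrow> b x y * spow (p - 1) (t - w y)" for y
    using p1 by (intro tendsto_mult tendsto_const tendsto_spow tendsto_diff tl wl) auto
qed

lemma Hs_cont:
  assumes "\<And>y. 0 \<le> w y \<and> w y \<le> 1" shows "continuous_on {0..1} (\<lambda>t. Hs b p x t w)"
proof (rule continuous_on_sequentiallyI)
  fix u :: "nat \<Rightarrow> real" and a assume "\<forall>n. u n \<in> {0..1}" "a \<in> {0..1}" "u \<longlonglongrightarrow> a"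
  then show "(\<lambda>n. Hs b p x (u n) w) \<longlonglongrightarrow> Hs b p x a w"
    using assms by (intro Hs_lim[where wk="\<lambda>_. w"]) auto
qed

lemma Hs_root:
  assumes "\<And>y. 0 \<le> w y \<and> w y \<le> 1" shows "\<exists>!t. t \<in> {0..1} \<and> Hs b p x t w = 0"
proof -
  obtain t where t: "0 \<le> t" "t \<le> 1" "Hs b p x t w = 0"
    using IVT'[of "\<lambda>t. Hs b p x t w" 0 0 1] Hs_0[OF assms] Hs_1[OF assms] Hs_cont[OF assms] by auto
  moreover have "t' = t" if "t' \<in> {0..1}" "Hs b p x t' w = 0" for t'
  proof (cases t' t rule: linorder_cases)
    case less then show ?thesis using Hs_strict[of t' t w x] that t assms by auto
  next
    case greater then show ?thesis using Hs_strict[of t t' w x] that t assms by auto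
  qed
  ultimately show ?thesis by auto
qed

lemma T_root:
  assumes "\<And>y. 0 \<le> w y \<and> w y \<le> 1" "x \<in> V - {x0}"
  shows "Tst b p V x0 w x \<in> {0..1} \<and> Hs b p x (Tst b p V x0 w x) w = 0"
  unfolding Tst_def using assms(2) theI'[OF Hs_root[OF assms(1), of x]] by simp

lemma T_W:
  assumes "w \<in> Wset V x0" shows "Tst b p V x0 w \<in> Wset V x0"
proof -
  have wb: "\<And>y. 0 \<le> w y \<and> w y \<le> 1" using assms by (simp add: Wset_def)
  show ?thesis using assms T_root[OF wb, of _ V x0]
    unfolding Wset_def by (auto simp: Tst_def)
qed

lemma T_mono:
  assumes w: "w \<in> Wset V x0" and w': "w' \<in> Wset V x0" and le: "\<And>y. w y \<le> w' y"
  shows "Tst b p V x0 w x \<le> Tst b p V x0 w' x"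
proof (cases "x \<in> V - {x0}")
  case False
  then have "Tst b p V x0 w x = w x" "Tst b p V x0 w' x = w' x" unfolding Tst_def by (simp_all only: if_False)
  then show ?thesis using le by simp
next
  case True
  have wb: "\<And>y. 0 \<le> w y \<and> w y \<le> 1" using w by (simp add: Wset_def)
  have wb': "\<And>y. 0 \<le> w' y \<and> w' y \<le> 1" using w' by (simp add: Wset_def)
  define t where "t = Tst b p V x0 w x"
  define t' where "t' = Tst b p V x0 w' x"
  have t: "t \<in> {0..1}" "Hs b p x t w = 0" using T_root[OF wb True] by (simp_all add: t_def)
  have t': "t' \<in> {0..1}" "Hs b p x t' w' = 0" using T_root[OF wb' True] by (simp_all add: t'_def)
  show ?thesis
  proof (rule ccontr)
    assume "\<not> ?thesis"
    then have "t' < t" by (simp add: t_def t'_def)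
    have "Hs b p x t' w' \<le> Hs b p x t' w" using t' wb wb' le by (intro Hs_anti) auto
    moreover have "Hs b p x t' w < Hs b p x t w" using \<open>t' < t\<close> t t' wb by (intro Hs_strict) auto
    ultimately show False using t t' by simp
  qed
qed

lemma dirichlet_exists:
  assumes V: "finite V" and x0: "x0 \<in> V"
  shows "\<exists>v. dirichlet_sol b m (\<lambda>_. 0) p x0 V v"
proof -
  define w0 where "w0 = (\<lambda>y::'a. if y = x0 then 1 else (0::real))"
  define sq where "sq = (\<lambda>k. (Tst b p V x0 ^^ k) w0)"
  have w0W: "w0 \<in> Wset V x0" using x0 by (auto simp: Wset_def w0_def)
  have sqS: "sq (Suc k) = Tst b p V x0 (sq k)" for k by (simp add: sq_def)
  have sqW: "sq k \<in> Wset V x0" for k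
    by (induction k) (use w0W T_W in \<open>auto simp: sq_def\<close>)
  have sqb: "0 \<le> sq k y \<and> sq k y \<le> 1" for k y using sqW[of k] by (simp add: Wset_def)
  have sqinc: "sq k y \<le> sq (Suc k) y" for k y
  proof (induction k arbitrary: y)
    case 0
    show ?case
    proof (cases "y \<in> V - {x0}")
      case True
      have "0 \<le> sq (Suc 0) y" using sqb by blast
      moreover have "sq 0 y = 0" using True by (simp add: sq_def w0_def)
      ultimately show ?thesis by simp
    next
      case False
      then have "Tst b p V x0 w0 y = w0 y" unfolding Tst_def by (simp only: if_False)
      then show ?thesis by (simp add: sq_def)
    qed
  next
    case (Suc k)
    show ?case unfolding sqS[of "Suc k"] sqS[of k]
      using T_mono[OF sqW[of k] sqW[of "Suc k"]] Suc by (simp add: sqS)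
  qed
  define v where "v = (\<lambda>y. SUP k. sq k y)"
  have vl: "(\<lambda>k. sq k y) \<longlonglongrightarrow> v y" for y
    unfolding v_def
    by (rule LIMSEQ_incseq_SUP) (use sqb sqinc in \<open>auto intro!: bdd_aboveI[where M=1] incseq_SucI\<close>)
  have vb: "0 \<le> v y \<and> v y \<le> 1" for y
  proof
    show "0 \<le> v y" by (rule LIMSEQ_le_const[OF vl]) (use sqb in auto)
    show "v y \<le> 1" by (rule LIMSEQ_le_const2[OF vl]) (use sqb in auto)
  qed
  have v1: "v x0 = 1"
  proof -
    have "sq k x0 = 1" for k using sqW[of k] by (simp add: Wset_def)
    then show ?thesis using vl[of x0] by (simp add: LIMSEQ_const_iff)
  qed
  have vout: "v y = 0" if "y \<notin> V" for y
  proof -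
    have "sq k y = 0" for k using sqW[of k] that by (simp add: Wset_def)
    then show ?thesis using vl[of y] by (simp add: LIMSEQ_const_iff)
  qed
  have vh: "lsum b p v x = 0" if xU: "x \<in> V - {x0}" for x
  proof -
    have z: "Hs b p x (sq (Suc k) x) (sq k) = 0" for k
      using T_root[OF _ xU, of "sq k"] sqb by (simp add: sqS)
    have "(\<lambda>k. Hs b p x (sq (Suc k) x) (sq k)) \<longlonglongrightarrow> Hs b p x (v x) v"
      by (rule Hs_lim) (use sqb vl LIMSEQ_Suc[OF vl[of x]] in auto)
    then have "Hs b p x (v x) v = 0" using z by (simp add: LIMSEQ_const_iff)
    then show ?thesis by (simp add: Hs_def lsum_def)
  qed
  show ?thesis using harmonic_is_sol[OF V x0 v1 vout vb vh] by blast
qed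

end

lemma BL_lemma:
  fixes a h :: "nat \<Rightarrow> 'b \<Rightarrow> real" and A :: "'b \<Rightarrow> real"
  assumes as: "\<And>n. a n summable_on UNIV" and As: "A summable_on UNIV" and hs: "\<And>n. h n summable_on UNIV"
    and ann: "\<And>n z. 0 \<le> a n z" and Ann: "\<And>z. 0 \<le> A z" and hnn: "\<And>n z. 0 \<le> h n z"
    and suml: "(\<lambda>n. infsum (a n) UNIV) \<longlonglongrightarrow> infsum A UNIV"
    and al: "\<And>z. (\<lambda>n. a n z) \<longlonglongrightarrow> A z" and hl: "\<And>z. (\<lambda>n. h n z) \<longlonglongrightarrow> 0"
    and K: "K \<ge> 0" and hb: "\<And>n z. h n z \<le> K * (a n z + A z)"
  shows "(\<lambda>n. infsum (h n) UNIV) \<longlonglongrightarrow> 0"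
proof (rule tendstoI)
  fix e :: real assume e: "e > 0"
  define d where "d = e / (2 * (1 + 3 * K))"
  have d: "d > 0" using e K by (simp add: d_def)
  have pos: "1 + 3 * K > 0" using K by simp
  have "d * (1 + 3 * K) = e / 2" unfolding d_def using pos by (simp add: field_simps)
  then have de: "d * (1 + 3 * K) < e" using e by simp
  obtain F where F: "finite F" "dist (sum A F) (infsum A UNIV) \<le> d"
    using infsum_finite_approximation[OF As d] by blast
  have split: "infsum g UNIV = sum g F + infsum g (-F)" if "g summable_on UNIV" for g :: "'b \<Rightarrow> real"
  proof -
    have "g summable_on (-F)" using that summable_on_subset by blast
    moreover have "UNIV = F \<union> (-F)" by auto
    ultimately show ?thesis using F(1) by (metis Compl_disjoint infsum_Un_disjoint infsum_finite summable_on_finite)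
  qed
  have Atail: "infsum A (-F) \<le> d" using F(2) split[OF As] by (simp add: dist_real_def)
  have "(\<lambda>n. infsum (a n) UNIV - sum (a n) F) \<longlonglongrightarrow> infsum A UNIV - sum A F"
    by (intro tendsto_diff suml tendsto_sum al)
  then have ev1: "eventually (\<lambda>n. infsum (a n) UNIV - sum (a n) F < infsum A UNIV - sum A F + d) sequentially"
    using d by (intro order_tendstoD) auto
  have "(\<lambda>n. sum (h n) F) \<longlonglongrightarrow> sum (\<lambda>_. 0) F" by (intro tendsto_sum hl)
  then have ev2: "eventually (\<lambda>n. sum (h n) F < d) sequentially"
    using d by (intro order_tendstoD) auto
  show "eventually (\<lambda>n. dist (infsum (h n) UNIV) 0 < e) sequentially"
    using ev1 ev2
  proof eventually_elim
    case (elim n)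
    have at: "infsum (a n) (-F) < 2 * d" using elim(1) split[OF as[of n]] split[OF As] Atail by linarith
    have hsF: "h n summable_on (-F)" using hs summable_on_subset by blast
    have asF: "a n summable_on (-F)" using as summable_on_subset by blast
    have AsF: "A summable_on (-F)" using As summable_on_subset by blast
    have "infsum (h n) (-F) \<le> infsum (\<lambda>z. K * (a n z + A z)) (-F)"
    proof (rule infsum_mono[OF hsF])
      show "(\<lambda>z. K * (a n z + A z)) summable_on (-F)"
        by (rule summable_on_cmult_right) (rule summable_on_add[OF asF AsF])
    qed (rule hb)
    also have "\<dots> = K * (infsum (a n) (-F) + infsum A (-F))"
      by (simp add: infsum_cmult_right' infsum_add[OF asF AsF])
    also have "\<dots> \<le> K * (2 * d + d)" using at Atail K by (intro mult_left_mono) auto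
    finally have "infsum (h n) (-F) \<le> 3 * K * d" by simp
    then have "infsum (h n) UNIV < d + 3 * K * d" using split[OF hs[of n]] elim(2) by linarith
    moreover have "infsum (h n) UNIV \<ge> 0" using hnn by (intro infsum_nonneg) auto
    ultimately show ?case using de by (simp add: dist_real_def algebra_simps)
  qed
qed

context pg begin

lemma dnorm_scale:
  assumes c: "c > 0"
  shows "dnorm_op b (\<lambda>_. 0) p x0 (\<lambda>x. c * g x) = c * dnorm_op b (\<lambda>_. 0) p x0 g"
proof -
  have pt: "b x y * \<bar>c * g x - c * g y\<bar> powr p = c powr p * (b x y * \<bar>g x - g y\<bar> powr p)" for x y
  proof -
    have "\<bar>c * g x - c * g y\<bar> = c * \<bar>g x - g y\<bar>" using c by (simp add: abs_mult flip: right_diff_distrib)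
    then show ?thesis using c by (simp add: powr_mult)
  qed
  have en: "energy b (\<lambda>_. 0) p (\<lambda>x. c * g x) = c powr p * energy b (\<lambda>_. 0) p g"
  proof -
    have "(\<lambda>(x, y). b x y * \<bar>c * g x - c * g y\<bar> powr p) = (\<lambda>z. c powr p * (case z of (x, y) \<Rightarrow> b x y * \<bar>g x - g y\<bar> powr p))"
      using pt by auto
    then show ?thesis unfolding energy0 by (simp add: infsum_cmult_right')
  qed
  have x0: "\<bar>c * g x0\<bar> powr p = c powr p * \<bar>g x0\<bar> powr p" using c by (simp add: abs_mult powr_mult)
  have nn: "0 \<le> energy b (\<lambda>_. 0) p g + \<bar>g x0\<bar> powr p" using energy_nonneg by simp
  have "dnorm_op b (\<lambda>_. 0) p x0 (\<lambda>x. c * g x) = (c powr p * (energy b (\<lambda>_. 0) p g + \<bar>g x0\<bar> powr p)) powr (1 / p)"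
    unfolding dnorm_op_def en x0 by (simp add: algebra_simps)
  also have "\<dots> = (c powr p) powr (1 / p) * (energy b (\<lambda>_. 0) p g + \<bar>g x0\<bar> powr p) powr (1 / p)"
    using nn by (simp add: powr_mult)
  also have "(c powr p) powr (1 / p) = c" using c p1 by (simp add: powr_powr)
  finally show ?thesis by (simp add: dnorm_op_def)
qed

lemma D0p_scale:
  assumes f: "f \<in> D0p b (\<lambda>_. 0) p x0" and c: "c > 0"
  shows "(\<lambda>x. c * f x) \<in> D0p b (\<lambda>_. 0) p x0"
proof -
  have fD: "f \<in> Dp b (\<lambda>_. 0) p" using f by (simp add: D0p_def)
  have pt: "b x y * \<bar>c * f x - c * f y\<bar> powr p = c powr p * (b x y * \<bar>f x - f y\<bar> powr p)" for x y
  proof -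
    have "\<bar>c * f x - c * f y\<bar> = c * \<bar>f x - f y\<bar>" using c by (simp add: abs_mult flip: right_diff_distrib)
    then show ?thesis using c by (simp add: powr_mult)
  qed
  have "(\<lambda>(x, y). b x y * \<bar>c * f x - c * f y\<bar> powr p) = (\<lambda>z. c powr p * (case z of (x, y) \<Rightarrow> b x y * \<bar>f x - f y\<bar> powr p))"
    using pt by auto
  moreover have "(\<lambda>z. c powr p * (case z of (x, y) \<Rightarrow> b x y * \<bar>f x - f y\<bar> powr p)) summable_on UNIV"
    using fD by (intro summable_on_cmult_right) (simp add: Dp_def)
  ultimately have D: "(\<lambda>x. c * f x) \<in> Dp b (\<lambda>_. 0) p" by (simp add: Dp_def)
  show ?thesis unfolding D0p_def
  proof (intro CollectI conjI D allI impI)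
    fix e :: real assume e: "e > 0"
    have ec: "e / c > 0" using e c by simp
    have "\<forall>e>0. \<exists>\<phi>. finite {x. \<phi> x \<noteq> 0} \<and> dnorm_op b (\<lambda>_. 0) p x0 (\<lambda>x. f x - \<phi> x) < e"
      using f unfolding D0p_def by blast
    then obtain \<phi> where \<phi>: "finite {x. \<phi> x \<noteq> 0}" "dnorm_op b (\<lambda>_. 0) p x0 (\<lambda>x. f x - \<phi> x) < e / c"
      using ec by blast
    have "finite {x. c * \<phi> x \<noteq> 0}" using \<phi>(1) c by simp
    moreover have "dnorm_op b (\<lambda>_. 0) p x0 (\<lambda>x. c * f x - c * \<phi> x) < e"
    proof -
      have "dnorm_op b (\<lambda>_. 0) p x0 (\<lambda>x. c * f x - c * \<phi> x) = c * dnorm_op b (\<lambda>_. 0) p x0 (\<lambda>x. f x - \<phi> x)"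
        using dnorm_scale[OF c, of x0 "\<lambda>x. f x - \<phi> x"] by (simp add: right_diff_distrib)
      also have "\<dots> < c * (e / c)" using \<phi>(2) c by (intro mult_strict_left_mono) auto
      finally show ?thesis using c by simp
    qed
    ultimately show "\<exists>\<phi>. finite {x. \<phi> x \<noteq> 0} \<and> dnorm_op b (\<lambda>_. 0) p x0 (\<lambda>x. c * f x - \<phi> x) < e"
      by (intro exI[of _ "\<lambda>x. c * \<phi> x"]) simp
  qed
qed

end

locale pot = pg b m p for b :: "'a \<Rightarrow> 'a \<Rightarrow> real" and m p +
  fixes X :: "nat \<Rightarrow> 'a set" and x0 :: 'a and us :: "nat \<Rightarrow> 'a \<Rightarrow> real"
  assumes Xfin: "\<And>n. finite (X n)" and Xinc: "\<And>n. X n \<subseteq> X (Suc n)"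
    and Xexh: "(\<Union>n. X n) = UNIV" and o0: "x0 \<in> X 0"
    and sol: "\<And>n. dirichlet_sol b m (\<lambda>_. 0) p x0 (X n) (us n)"
begin

lemma Xmono: "n \<le> k \<Longrightarrow> X n \<subseteq> X k"
  by (rule lift_Suc_mono_le[of X]) (use Xinc in auto)

lemma x0X: "x0 \<in> X n" using Xmono[of 0 n] o0 by auto

lemma fin_in_X: "finite F \<Longrightarrow> \<exists>N. F \<subseteq> X N"
proof (induction F rule: finite_induct)
  case empty then show ?case by auto
next
  case (insert x F)
  then obtain N where N: "F \<subseteq> X N" by blast
  obtain N' where N': "x \<in> X N'" using Xexh by blast
  have "insert x F \<subseteq> X (max N N')" using N N' Xmono[of N "max N N'"] Xmono[of N' "max N N'"] by auto
  then show ?case by blast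
qed

lemma ev_in: "\<exists>N. \<forall>n\<ge>N. x \<in> X n"
proof -
  obtain N where "{x} \<subseteq> X N" using fin_in_X[of "{x}"] by auto
  then show ?thesis using Xmono by blast
qed

lemma usF: "us n \<in> Fp b p" using sol[of n] by (simp add: dirichlet_sol_def)
lemma ush: "x \<in> X n - {x0} \<Longrightarrow> lsum b p (us n) x = 0"
proof -
  assume x: "x \<in> X n - {x0}"
  have "plap b m p (us n) x = 0" using sol[of n] x by (simp add: dirichlet_sol_def)
  then show ?thesis using m_pos[of x] by (simp add: plap_eq)
qed
lemma us1: "us n x0 = 1" using sol[of n] by (simp add: dirichlet_sol_def)
lemma usout: "x \<notin> X n \<Longrightarrow> us n x = 0" using sol[of n] by (simp add: dirichlet_sol_def)
lemma usE: "energy b (\<lambda>_. 0) p (us n) = cap b (\<lambda>_. 0) p {x0} (X n)"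
  using sol[of n] by (simp add: dirichlet_sol_def)

lemma const_F: "(\<lambda>_. k) \<in> Fp b p" by (rule Fp_bounded[where M="\<bar>k\<bar>"]) simp

lemma us_nn: "0 \<le> us n x"
proof -
  have "(\<lambda>_. 0) x \<le> us n x"
  proof (rule comparison[of "X n - {x0}"])
    show "finite (X n - {x0})" using Xfin by simp
  qed (use const_F usF ush us1 usout in \<open>auto simp: lsum_const\<close>)
  then show ?thesis by simp
qed

lemma us_le1: "us n x \<le> 1"
proof -
  have "us n x \<le> (\<lambda>_. 1) x"
  proof (rule comparison[of "X n - {x0}"])
    show "finite (X n - {x0})" using Xfin by simp
  qed (use const_F usF ush us1 usout in \<open>auto simp: lsum_const\<close>)
  then show ?thesis by simp
qed

lemma usb: "\<bar>us n x\<bar> \<le> 1" using us_nn[of n x] us_le1[of n x] by simp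

lemma us_mono: "us n x \<le> us (Suc n) x"
proof (rule comparison[of "X n - {x0}"])
  show "finite (X n - {x0})" using Xfin by simp
  show "lsum b p (us n) y \<le> lsum b p (us (Suc n)) y" if "y \<in> X n - {x0}" for y
    using that ush[of y n] ush[of y "Suc n"] Xinc[of n] by auto
  show "us n y \<le> us (Suc n) y" if "y \<notin> X n - {x0}" for y
    using that us1 usout[of y n] us_nn[of "Suc n" y] by (cases "y = x0") auto
qed (use usF in auto)

lemma us_fin: "finite {x. us n x \<noteq> 0}"
  using Xfin[of n] usout[of _ n] by (metis (mono_tags) finite_subset mem_Collect_eq subsetI)

definition u where "u = (\<lambda>x. SUP n. us n x)"

lemma ul: "(\<lambda>n. us n x) \<longlonglongrightarrow> u x"
  unfolding u_def
proof (rule LIMSEQ_incseq_SUP)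
  show "bdd_above (range (\<lambda>n. us n x))" by (rule bdd_aboveI[of _ 1]) (use us_le1 in auto)
  show "incseq (\<lambda>n. us n x)" by (rule incseq_SucI) (rule us_mono)
qed

lemma u_nn: "0 \<le> u x" by (rule LIMSEQ_le_const[OF ul]) (use us_nn in auto)
lemma u_le1: "u x \<le> 1" by (rule LIMSEQ_le_const2[OF ul]) (use us_le1 in auto)
lemma ub: "\<bar>u x\<bar> \<le> 1" using u_nn[of x] u_le1[of x] by simp
lemma u1: "u x0 = 1" using ul[of x0] by (simp add: us1 LIMSEQ_const_iff)
lemma us_le_u: "us n x \<le> u x"
  unfolding u_def by (rule cSUP_upper) (auto intro: bdd_aboveI[of _ 1] us_le1)
lemma uF: "u \<in> Fp b p" by (rule Fp_bounded[OF ub])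

lemma lsum_us_lim: "(\<lambda>n. lsum b p (us n) x) \<longlonglongrightarrow> lsum b p u x"
  by (rule lsum_dct[OF usb ul])

lemma uh: "x \<noteq> x0 \<Longrightarrow> lsum b p u x = 0"
proof -
  assume "x \<noteq> x0"
  obtain N where N: "\<And>n. n \<ge> N \<Longrightarrow> x \<in> X n" using ev_in by blast
  have "eventually (\<lambda>n. lsum b p (us n) x = 0) sequentially"
    unfolding eventually_sequentially using N ush \<open>x \<noteq> x0\<close> by blast
  then have "(\<lambda>n. lsum b p (us n) x) \<longlonglongrightarrow> 0" by (rule tendsto_eventually)
  then show ?thesis using lsum_us_lim LIMSEQ_unique by blast
qed

lemma upos: "0 < u x"
  by (rule pos_principle[OF uF u_nn, of x0]) (use u1 uh in auto)

definition En where "En n = energy b (\<lambda>_. 0) p (us n)"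
definition L where "L = (INF n. En n)"

lemma En_nn: "0 \<le> En n" by (simp add: En_def energy_nonneg)

lemma En_dec: "En (Suc n) \<le> En n"
proof -
  have "En (Suc n) = cap b (\<lambda>_. 0) p {x0} (X (Suc n))" by (simp add: En_def usE)
  also have "\<dots> \<le> energy b (\<lambda>_. 0) p (us n)"
  proof (rule cap_lower)
    show "us n x = 0" if "x \<notin> X (Suc n)" for x using that Xinc[of n] usout[of x n] by blast
  qed (use us_fin us1 in auto)
  finally show ?thesis by (simp add: En_def)
qed

lemma En_lim: "En \<longlonglongrightarrow> L"
  unfolding L_def
proof (rule LIMSEQ_decseq_INF)
  show "bdd_below (range En)" by (rule bdd_belowI[of _ 0]) (use En_nn in auto)
  show "decseq En" by (rule decseq_SucI) (rule En_dec)
qed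

lemma L_le: "L \<le> En n"
  unfolding L_def by (rule cINF_lower) (auto intro: bdd_belowI[of _ 0] En_nn)

lemma L_nn: "0 \<le> L"
  unfolding L_def by (rule cINF_greatest) (auto intro: En_nn)

lemma pw_us_summable: "(\<lambda>(x, y). b x y * \<bar>us n x - us n y\<bar> powr p) summable_on UNIV"
  by (rule pw_summable[OF Xfin[of n] usout usb])

lemma lsum_x0: "lsum b p (us n) x0 = En n"
proof -
  have g: "(\<Sum>\<^sub>\<infinity>(x, y). b x y * spow (p - 1) (us n x - us n y) * (us n x - us n y))
        = 2 * (\<Sum>x\<in>X n. us n x * lsum b p (us n) x)"
    by (rule green_formula[OF usb Xfin usout])
  have "(\<Sum>x\<in>X n. us n x * lsum b p (us n) x) = us n x0 * lsum b p (us n) x0 + (\<Sum>x\<in>X n - {x0}. us n x * lsum b p (us n) x)"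
    using Xfin[of n] x0X[of n] by (simp add: sum.remove)
  also have "(\<Sum>x\<in>X n - {x0}. us n x * lsum b p (us n) x) = 0" using ush by simp
  finally have s: "(\<Sum>x\<in>X n. us n x * lsum b p (us n) x) = lsum b p (us n) x0" by (simp add: us1)
  have "spow (p - 1) a * a = \<bar>a\<bar> powr p" for a using spow_times_self[of "p - 1" a] p1 by simp
  then have "(\<Sum>\<^sub>\<infinity>(x, y). b x y * spow (p - 1) (us n x - us n y) * (us n x - us n y))
        = (\<Sum>\<^sub>\<infinity>(x, y). b x y * \<bar>us n x - us n y\<bar> powr p)"
    by (simp add: mult.assoc)
  then show ?thesis using g s by (simp add: En_def energy0)
qed

lemma Lu: "lsum b p u x0 = L"
proof -
  have "(\<lambda>n. lsum b p (us n) x0) \<longlonglongrightarrow> L" using En_lim by (simp add: lsum_x0)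
  then show ?thesis using lsum_us_lim LIMSEQ_unique by blast
qed

end

context pg begin
definition pwf :: "('a \<Rightarrow> real) \<Rightarrow> 'a \<times> 'a \<Rightarrow> real" where
  "pwf f = (\<lambda>(x, y). b x y * \<bar>f x - f y\<bar> powr p)"

lemma energy_pwf: "energy b (\<lambda>_. 0) p f = (1/2) * infsum (pwf f) UNIV"
  by (simp add: energy0 pwf_def)

lemma pwf_nn: "0 \<le> pwf f z" by (cases z) (simp add: pwf_def b_nn)
end

context pot begin

lemma pwf_lim: "(\<lambda>n. pwf (us n) z) \<longlonglongrightarrow> pwf u z"
proof -
  obtain x y where z: "z = (x, y)" by force
  have "(\<lambda>n. b x y * \<bar>us n x - us n y\<bar> powr p) \<longlonglongrightarrow> b x y * \<bar>u x - u y\<bar> powr p"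
    using p1 by (intro tendsto_mult tendsto_const tendsto_powr' tendsto_rabs tendsto_diff ul) auto
  then show ?thesis by (simp add: z pwf_def)
qed

lemma pwf_us_summable: "pwf (us n) summable_on UNIV"
  using pw_us_summable by (simp add: pwf_def)

lemma infsum_pwf_us: "infsum (pwf (us n)) UNIV = 2 * En n"
  by (simp add: En_def energy_pwf)

lemma Eu_le: "pwf u summable_on UNIV \<and> infsum (pwf u) UNIV \<le> 2 * L"
proof -
  have bnd: "sum (pwf u) F \<le> 2 * L" if F: "finite F" for F
  proof -
    have l1: "(\<lambda>n. sum (pwf (us n)) F) \<longlonglongrightarrow> sum (pwf u) F" by (intro tendsto_sum pwf_lim)
    have l2: "(\<lambda>n. 2 * En n) \<longlonglongrightarrow> 2 * L" by (intro tendsto_mult tendsto_const En_lim)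
    have "sum (pwf (us n)) F \<le> 2 * En n" for n
      using finite_sum_le_infsum[OF pwf_us_summable F, of n] pwf_nn infsum_pwf_us by auto
    then show ?thesis using LIMSEQ_le[OF l1 l2] by blast
  qed
  have s: "pwf u summable_on UNIV"
    by (rule nonneg_bdd_above_summable_on) (use pwf_nn bnd in \<open>auto intro!: bdd_aboveI[of _ "2 * L"]\<close>)
  moreover have "infsum (pwf u) UNIV \<le> 2 * L"
    by (rule infsum_le_finite_sums[OF s]) (use bnd in auto)
  ultimately show ?thesis by blast
qed

lemma pwf_u_summable: "pwf u summable_on UNIV" using Eu_le by blast

lemma Eu_ge: "L \<le> energy b (\<lambda>_. 0) p u"
proof -
  define Eu where "Eu = energy b (\<lambda>_. 0) p u"
  have Eu: "infsum (pwf u) UNIV = 2 * Eu" by (simp add: Eu_def energy_pwf)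
  have key: "(1 - p) * Eu + p * L \<le> En n" for n
  proof -
    define Cn where "Cn = (\<lambda>(x, y). b x y * spow (p - 1) (u x - u y) * (us n x - us n y))"
    have sC: "Cn summable_on UNIV" unfolding Cn_def by (rule cross_summable[OF ub Xfin usout])
    have g: "infsum Cn UNIV = 2 * (\<Sum>x\<in>X n. us n x * lsum b p u x)"
      unfolding Cn_def by (rule green_formula[OF ub Xfin usout])
    have "(\<Sum>x\<in>X n. us n x * lsum b p u x) = us n x0 * lsum b p u x0 + (\<Sum>x\<in>X n - {x0}. us n x * lsum b p u x)"
      using Xfin[of n] x0X[of n] by (simp add: sum.remove)
    also have "(\<Sum>x\<in>X n - {x0}. us n x * lsum b p u x) = 0" using uh by simp
    finally have iC: "infsum Cn UNIV = 2 * L" using g by (simp add: us1 Lu)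
    have pt: "pwf u z + p * Cn z - p * pwf u z \<le> pwf (us n) z" for z
    proof -
      obtain x y where z: "z = (x, y)" by force
      define a where "a = us n x - us n y"
      define c where "c = u x - u y"
      have ci: "\<bar>c\<bar> powr p + p * spow (p - 1) c * (a - c) \<le> \<bar>a\<bar> powr p" by (rule convex_ineq[OF p1])
      have sc: "spow (p - 1) c * c = \<bar>c\<bar> powr p" using spow_times_self[of "p - 1" c] p1 by simp
      have "b x y * (\<bar>c\<bar> powr p + p * spow (p - 1) c * (a - c)) \<le> b x y * \<bar>a\<bar> powr p"
        using ci b_nn by (intro mult_left_mono) auto
      moreover have "b x y * (\<bar>c\<bar> powr p + p * spow (p - 1) c * (a - c))
          = b x y * \<bar>c\<bar> powr p + p * (b x y * spow (p - 1) c * a) - p * (b x y * (spow (p - 1) c * c))"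
        by (simp add: algebra_simps)
      ultimately show ?thesis unfolding z pwf_def Cn_def a_def c_def using sc
        by (simp add: c_def)
    qed
    have s3: "(\<lambda>z. pwf u z + p * Cn z - p * pwf u z) summable_on UNIV"
      by (intro summable_on_diff' summable_on_add summable_on_cmult_right pwf_u_summable sC)
    have "infsum (\<lambda>z. pwf u z + p * Cn z - p * pwf u z) UNIV \<le> infsum (pwf (us n)) UNIV"
      by (rule infsum_mono[OF s3 pwf_us_summable]) (rule pt)
    moreover have "infsum (\<lambda>z. pwf u z + p * Cn z - p * pwf u z) UNIV
        = infsum (pwf u) UNIV + p * infsum Cn UNIV - p * infsum (pwf u) UNIV"
    proof -
      have "infsum (\<lambda>z. pwf u z + p * Cn z - p * pwf u z) UNIV
          = infsum (\<lambda>z. pwf u z + p * Cn z) UNIV - infsum (\<lambda>z. p * pwf u z) UNIV"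
        by (intro infsum_diff' summable_on_add summable_on_cmult_right pwf_u_summable sC)
      also have "infsum (\<lambda>z. pwf u z + p * Cn z) UNIV = infsum (pwf u) UNIV + infsum (\<lambda>z. p * Cn z) UNIV"
        by (intro infsum_add summable_on_cmult_right pwf_u_summable sC)
      finally show ?thesis by (simp add: infsum_cmult_right')
    qed
    ultimately have "2 * Eu + p * (2 * L) - p * (2 * Eu) \<le> 2 * En n"
      using Eu iC infsum_pwf_us by simp
    then show ?thesis by (simp add: algebra_simps)
  qed
  have "(1 - p) * Eu + p * L \<le> L"
    by (rule LIMSEQ_le_const[OF En_lim]) (use key in auto)
  then have "(p - 1) * L \<le> (p - 1) * Eu" by (simp add: algebra_simps)
  then show ?thesis using p1 by (simp add: Eu_def)
qed

lemma Eu: "energy b (\<lambda>_. 0) p u = L"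
  using Eu_le Eu_ge by (simp add: energy_pwf)

lemma infsum_pwf_u: "infsum (pwf u) UNIV = 2 * L"
  using Eu by (simp add: energy_pwf)

lemma conv: "(\<lambda>n. infsum (pwf (\<lambda>x. us n x - u x)) UNIV) \<longlonglongrightarrow> 0"
proof (rule BL_lemma[where a="\<lambda>n. pwf (us n)" and A="pwf u" and K="2 powr p"])
  show hb: "pwf (\<lambda>x. us n x - u x) z \<le> 2 powr p * (pwf (us n) z + pwf u z)" for n z
  proof -
    obtain x y where z: "z = (x, y)" by force
    have "\<bar>(us n x - us n y) - (u x - u y)\<bar> powr p \<le> 2 powr p * (\<bar>us n x - us n y\<bar> powr p + \<bar>u x - u y\<bar> powr p)"
      using p1 by (intro diff_powr_le) auto
    then have "b x y * \<bar>(us n x - us n y) - (u x - u y)\<bar> powr p \<le> b x y * (2 powr p * (\<bar>us n x - us n y\<bar> powr p + \<bar>u x - u y\<bar> powr p))"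
      using b_nn by (intro mult_left_mono) auto
    moreover have "(us n x - us n y) - (u x - u y) = (us n x - u x) - (us n y - u y)" by simp
    ultimately show ?thesis unfolding z pwf_def by (simp add: algebra_simps)
  qed
  show "pwf (\<lambda>x. us n x - u x) summable_on UNIV" for n
  proof (rule summable_on_comparison_test)
    show "(\<lambda>z. 2 powr p * (pwf (us n) z + pwf u z)) summable_on UNIV"
      by (intro summable_on_cmult_right summable_on_add pwf_us_summable pwf_u_summable)
  qed (use hb pwf_nn in auto)
  show "(\<lambda>n. infsum (pwf (us n)) UNIV) \<longlonglongrightarrow> infsum (pwf u) UNIV"
    unfolding infsum_pwf_us infsum_pwf_u by (intro tendsto_mult tendsto_const En_lim)
  show "(\<lambda>n. pwf (\<lambda>x. us n x - u x) z) \<longlonglongrightarrow> 0" for z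
  proof -
    obtain x y where z: "z = (x, y)" by force
    have "(\<lambda>n. b x y * \<bar>(us n x - u x) - (us n y - u y)\<bar> powr p) \<longlonglongrightarrow> b x y * \<bar>(u x - u x) - (u y - u y)\<bar> powr p"
      using p1 by (intro tendsto_mult tendsto_const tendsto_powr' tendsto_rabs tendsto_diff ul) auto
    then show ?thesis by (simp add: z pwf_def)
  qed
qed (use pwf_us_summable pwf_u_summable pwf_nn pwf_lim in auto)

lemma dnorm_conv: "(\<lambda>n. dnorm_op b (\<lambda>_. 0) p x0 (\<lambda>x. us n x - u x)) \<longlonglongrightarrow> 0"
proof -
  have e: "dnorm_op b (\<lambda>_. 0) p x0 (\<lambda>x. us n x - u x) = ((1/2) * infsum (pwf (\<lambda>x. us n x - u x)) UNIV) powr (1 / p)" for n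
    by (simp add: dnorm_op_def energy_pwf us1 u1)
  have "(\<lambda>n. ((1/2) * infsum (pwf (\<lambda>x. us n x - u x)) UNIV) powr (1 / p)) \<longlonglongrightarrow> ((1/2) * 0) powr (1 / p)"
  proof (rule tendsto_powr')
    show "(\<lambda>n. 1 / 2 * infsum (pwf (\<lambda>x. us n x - u x)) UNIV) \<longlonglongrightarrow> 1 / 2 * 0"
      by (intro tendsto_mult tendsto_const conv)
  qed (use p1 pwf_nn in \<open>auto intro!: always_eventually infsum_nonneg\<close>)
  then show ?thesis unfolding e by simp
qed

lemma uDp: "u \<in> Dp b (\<lambda>_. 0) p"
  using pwf_u_summable by (simp add: Dp_def pwf_def)

lemma usDp: "us n \<in> Dp b (\<lambda>_. 0) p"
  using pwf_us_summable by (simp add: Dp_def pwf_def)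

lemma uD0: "u \<in> D0p b (\<lambda>_. 0) p x0"
  unfolding D0p_def
proof (intro CollectI conjI uDp allI impI)
  fix e :: real assume e: "e > 0"
  obtain n where n: "dnorm_op b (\<lambda>_. 0) p x0 (\<lambda>x. us n x - u x) < e"
  proof -
    obtain no where "\<forall>n\<ge>no. norm (dnorm_op b (\<lambda>_. 0) p x0 (\<lambda>x. us n x - u x) - 0) < e"
      using LIMSEQ_D[OF dnorm_conv e] by blast
    then have "\<bar>dnorm_op b (\<lambda>_. 0) p x0 (\<lambda>x. us no x - u x)\<bar> < e" by auto
    then show ?thesis using that[of no] by (simp add: abs_less_iff)
  qed
  have "dnorm_op b (\<lambda>_. 0) p x0 (\<lambda>x. u x - us n x) = dnorm_op b (\<lambda>_. 0) p x0 (\<lambda>x. us n x - u x)"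
  proof -
    have "\<bar>(u x - us n x) - (u y - us n y)\<bar> = \<bar>(us n x - u x) - (us n y - u y)\<bar>" for x y by linarith
    moreover have "\<bar>u x0 - us n x0\<bar> = \<bar>us n x0 - u x0\<bar>" by linarith
    ultimately show ?thesis by (simp add: dnorm_op_def energy0)
  qed
  then show "\<exists>\<phi>. finite {x. \<phi> x \<noteq> 0} \<and> dnorm_op b (\<lambda>_. 0) p x0 (\<lambda>x. u x - \<phi> x) < e"
    using n us_fin[of n] by auto
qed

lemma cap_UNIV: "cap b (\<lambda>_. 0) p {x0} UNIV = L"
proof (rule antisym)
  have "cap b (\<lambda>_. 0) p {x0} UNIV \<le> En n" for n
    unfolding En_def by (rule cap_lower) (use us_fin us1 in auto)
  then show "cap b (\<lambda>_. 0) p {x0} UNIV \<le> L"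
    using LIMSEQ_le_const[OF En_lim, of "cap b (\<lambda>_. 0) p {x0} UNIV"] by blast
next
  show "L \<le> cap b (\<lambda>_. 0) p {x0} UNIV"
  proof (rule cap_greatest[of "us 0"])
    fix \<phi> :: "'a \<Rightarrow> real"
    assume f: "finite {x. \<phi> x \<noteq> 0}" and one: "\<And>x. x \<in> {x0} \<Longrightarrow> 1 \<le> \<phi> x"
    obtain N where N: "{x. \<phi> x \<noteq> 0} \<subseteq> X N" using fin_in_X[OF f] by blast
    have "cap b (\<lambda>_. 0) p {x0} (X N) \<le> energy b (\<lambda>_. 0) p \<phi>"
      by (rule cap_lower) (use f one N in auto)
    then show "L \<le> energy b (\<lambda>_. 0) p \<phi>" using L_le[of N] usE[of N] by (simp add: En_def)
  qed (use us_fin us1 in auto)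
qed

end

context pot begin

lemma scale_b: assumes "0 < c" shows "\<bar>c * us n x\<bar> \<le> c"
proof -
  have "c * \<bar>us n x\<bar> \<le> c * 1" using usb[of n x] assms by (intro mult_left_mono) auto
  then show ?thesis using assms by (simp add: abs_mult)
qed

abbreviation "uconst \<equiv> (\<exists>k. \<forall>x. u x = k)"

lemma const_iff: "uconst \<longleftrightarrow> cap b (\<lambda>_. 0) p {x0} UNIV = 0"
proof
  assume "uconst"
  then obtain k where k: "\<And>x. u x = k" by blast
  have "pwf u = (\<lambda>_. 0)" by (auto simp: pwf_def k fun_eq_iff)
  then have "infsum (pwf u) UNIV = 0" by simp
  then show "cap b (\<lambda>_. 0) p {x0} UNIV = 0" using infsum_pwf_u cap_UNIV by simp
next
  assume "cap b (\<lambda>_. 0) p {x0} UNIV = 0"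
  then have "infsum (pwf u) UNIV \<le> 0" using infsum_pwf_u cap_UNIV by simp
  then have z: "pwf u z = 0" for z using nonneg_infsum_le_0D[OF _ pwf_u_summable] pwf_nn by blast
  have "{x. u x = u x0} = UNIV"
  proof (rule closed_UNIV[of x0])
    fix x y assume "x \<in> {x. u x = u x0}" "0 < b x y"
    moreover have "b x y * \<bar>u x - u y\<bar> powr p = 0" using z[of "(x, y)"] by (simp add: pwf_def)
    ultimately show "y \<in> {x. u x = u x0}" by simp
  qed simp
  then show "uconst" by auto
qed

lemma plap_u: "plap b m p u x0 = L / m x0" by (simp add: plap_eq Lu)

lemma plap_iff: "cap b (\<lambda>_. 0) p {x0} UNIV = 0 \<longleftrightarrow> plap b m p u x0 = 0"
  using m_pos[of x0] by (simp add: plap_u cap_UNIV)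

lemma mplap: "m x0 * plap b m p u x0 = L" using m_pos[of x0] by (simp add: plap_u)

lemma inf0:
  assumes nc: "\<not> uconst" shows "(INF x. u x) = 0"
proof -
  define \<epsilon> where "\<epsilon> = (INF x. u x)"
  have bdd: "bdd_below (range u)" by (rule bdd_belowI[of _ 0]) (use u_nn in auto)
  have el: "\<epsilon> \<le> u x" for x unfolding \<epsilon>_def by (rule cINF_lower[OF bdd]) simp
  have e0: "0 \<le> \<epsilon>" unfolding \<epsilon>_def by (rule cINF_greatest) (use u_nn in auto)
  have e1: "\<epsilon> \<le> 1" using el[of x0] u1 by simp
  show ?thesis
  proof (rule ccontr)
    assume "(INF x. u x) \<noteq> 0"
    then have ep: "\<epsilon> > 0" using e0 by (simp add: \<epsilon>_def)
    have step: "\<epsilon> + (1 - \<epsilon>) * us n x \<le> u x" for n x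
    proof -
      define f where "f = (\<lambda>x. \<epsilon> + (1 - \<epsilon>) * us n x)"
      have fb: "\<bar>f y\<bar> \<le> 1" for y
      proof -
        have "(1 - \<epsilon>) * us n y \<le> (1 - \<epsilon>) * 1" using e1 us_le1 by (intro mult_left_mono) auto
        moreover have "0 \<le> (1 - \<epsilon>) * us n y" using e1 us_nn by simp
        ultimately show ?thesis unfolding f_def using e0 by simp
      qed
      have "f x \<le> u x"
      proof (rule comparison[of "X n - {x0}"])
        show "finite (X n - {x0})" using Xfin by simp
        show "f \<in> Fp b p" by (rule Fp_bounded[OF fb])
        show "u \<in> Fp b p" by (rule uF)
        show "lsum b p f y \<le> lsum b p u y" if "y \<in> X n - {x0}" for y
          using that ush[OF that] uh[of y] e1 unfolding f_def by (subst lsum_affine) auto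
        show "f y \<le> u y" if "y \<notin> X n - {x0}" for y
        proof (cases "y = x0")
          case True then show ?thesis by (simp add: f_def us1 u1)
        next
          case False then have "y \<notin> X n" using that by simp
          then show ?thesis using el[of y] by (simp add: f_def usout)
        qed
      qed
      then show ?thesis by (simp add: f_def)
    qed
    have lim: "\<epsilon> + (1 - \<epsilon>) * u x \<le> u x" for x
      by (rule LIMSEQ_le_const2[OF tendsto_add[OF tendsto_const tendsto_mult[OF tendsto_const ul]]])
         (use step in auto)
    have "u x = 1" for x
    proof -
      have "\<epsilon> * (1 - u x) \<le> 0" using lim[of x] by (simp add: algebra_simps)
      then have "1 - u x \<le> 0" using ep by (simp add: mult_le_0_iff)
      then show ?thesis using u_le1[of x] by simp
    qed
    then show False using nc by blast
  qed
qed

lemma Lpos: "\<not> uconst \<Longrightarrow> L > 0"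
  using const_iff cap_UNIV L_nn by auto

definition Cc where "Cc = L powr (-1 / (p - 1))"

lemma Cc_pow: assumes "L > 0" shows "Cc powr (p - 1) = 1 / L"
proof -
  have "Cc powr (p - 1) = L powr (-1 / (p - 1) * (p - 1))" by (simp add: Cc_def powr_powr)
  also have "-1 / (p - 1) * (p - 1) = -1" using p1 by simp
  finally show ?thesis using assms by (simp add: powr_minus_divide)
qed

lemma green_Cu:
  assumes nc: "\<not> uconst" shows "green_eq b m p x0 (\<lambda>x. Cc * u x)"
proof -
  have L: "L > 0" using Lpos nc by blast
  have C: "Cc > 0" using L by (simp add: Cc_def)
  have b: "\<bar>Cc * u x\<bar> \<le> Cc" for x using ub[of x] C by (simp add: abs_mult)
  have pl: "plap b m p (\<lambda>x. Cc * u x) x = (if x = x0 then 1 / m x else 0)" for x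
  proof -
    have "plap b m p (\<lambda>x. Cc * u x) x = Cc powr (p - 1) * lsum b p u x / m x"
      using C by (simp add: plap_eq lsum_scale)
    then show ?thesis using Cc_pow[OF L] uh[of x] L by (auto simp: Lu)
  qed
  show ?thesis unfolding green_eq_def
    using C upos Fp_bounded[OF b] pl by auto
qed

lemma green_lsum:
  assumes "green_eq b m p x0 h" shows "lsum b p h x = (if x = x0 then 1 else 0)"
proof -
  have "plap b m p h x = (if x = x0 then 1 / m x else 0)" using assms by (simp add: green_eq_def)
  then show ?thesis using m_pos[of x] by (auto simp: plap_eq split: if_splits)
qed

lemma green_below:
  assumes nc: "\<not> uconst" and h: "green_eq b m p x0 h" shows "Cc * u x \<le> h x"
proof -
  have L: "L > 0" using Lpos nc by blast
  have hF: "h \<in> Fp b p" and hpos: "\<And>x. 0 < h x" using h by (auto simp: green_eq_def)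
  define Cn where "Cn = (\<lambda>n. En n powr (-1 / (p - 1)))"
  have Enp: "En n > 0" for n using L_le[of n] L by simp
  have Cnp: "Cn n > 0" for n using Enp[of n] by (simp add: Cn_def)
  have Cn_pow: "Cn n powr (p - 1) = 1 / En n" for n
  proof -
    have "Cn n powr (p - 1) = En n powr (-1 / (p - 1) * (p - 1))" by (simp add: Cn_def powr_powr)
    also have "-1 / (p - 1) * (p - 1) = -1" using p1 by simp
    finally show ?thesis using Enp[of n] by (simp add: powr_minus_divide)
  qed
  have step: "Cn n * us n x \<le> h x" for n
  proof (rule comparison[of "X n"])
    show "finite (X n)" by (rule Xfin)
    show "(\<lambda>x. Cn n * us n x) \<in> Fp b p"
      by (rule Fp_bounded[where M="Cn n"]) (rule scale_b[OF Cnp])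
    show "h \<in> Fp b p" by (rule hF)
    show "lsum b p (\<lambda>x. Cn n * us n x) y \<le> lsum b p h y" if "y \<in> X n" for y
    proof -
      have "lsum b p (\<lambda>x. Cn n * us n x) y = Cn n powr (p - 1) * lsum b p (us n) y"
        using Cnp[of n] by (simp add: lsum_scale)
      then show ?thesis using green_lsum[OF h, of y] Cn_pow[of n] lsum_x0[of n] Enp[of n] ush[of y n] that
        by (cases "y = x0") auto
    qed
    show "Cn n * us n y \<le> h y" if "y \<notin> X n" for y using usout[OF that] hpos[of y] by simp
  qed
  have "Cn \<longlonglongrightarrow> Cc" unfolding Cn_def Cc_def using L by (intro tendsto_powr En_lim tendsto_const) auto
  then have "(\<lambda>n. Cn n * us n x) \<longlonglongrightarrow> Cc * u x" by (intro tendsto_mult ul)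
  then show ?thesis by (rule LIMSEQ_le_const2) (use step in auto)
qed

lemma green_const:
  assumes c: "uconst" shows "\<not> green_eq b m p x0 h"
proof
  assume h: "green_eq b m p x0 h"
  have hF: "h \<in> Fp b p" and hpos: "\<And>x. 0 < h x" using h by (auto simp: green_eq_def)
  have u1': "u x = 1" for x using c u1 by auto
  define t where "t = h x0"
  have t: "t > 0" using hpos by (simp add: t_def)
  have step: "t * us n x \<le> h x" for n x
  proof (rule comparison[of "X n - {x0}"])
    show "finite (X n - {x0})" using Xfin by simp
    show "(\<lambda>x. t * us n x) \<in> Fp b p"
      by (rule Fp_bounded[where M=t]) (rule scale_b[OF t])
    show "h \<in> Fp b p" by (rule hF)
    show "lsum b p (\<lambda>x. t * us n x) y \<le> lsum b p h y" if "y \<in> X n - {x0}" for y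
      using that t ush[OF that] green_lsum[OF h, of y] by (simp add: lsum_scale)
    show "t * us n y \<le> h y" if "y \<notin> X n - {x0}" for y
      using that usout[of y n] us1 hpos[of y] by (cases "y = x0") (auto simp: t_def)
  qed
  have "t * u x \<le> h x" for x
    by (rule LIMSEQ_le_const2[OF tendsto_mult[OF tendsto_const ul]]) (use step in auto)
  then have ge: "h x0 \<le> h y" for y using u1' by (simp add: t_def)
  have "lsum b p h x0 \<le> infsum (\<lambda>_::'a. 0::real) UNIV"
    unfolding lsum_def
  proof (rule infsum_mono)
    show "(\<lambda>y. b x0 y * spow (p - 1) (h x0 - h y)) summable_on UNIV" by (rule lsum_summable[OF hF])
    fix y show "b x0 y * spow (p - 1) (h x0 - h y) \<le> 0"
      using ge[of y] b_nn[of x0 y] by (intro mult_nonneg_nonpos) (auto simp: spow_nonpos_iff)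
  qed auto
  then show False using green_lsum[OF h, of x0] by simp
qed

lemma is_green_Cu: "\<not> uconst \<Longrightarrow> is_green b m p x0 (\<lambda>x. Cc * u x)"
  unfolding is_green_def using green_Cu green_below by blast

lemma green_char:
  assumes g: "is_green b m p x0 g"
  shows "\<not> uconst" and "\<And>x. g x = Cc * u x"
proof -
  have "green_eq b m p x0 g" using g by (simp add: is_green_def)
  then show nc: "\<not> uconst" using green_const by blast
  show "g x = Cc * u x" for x
  proof (rule antisym)
    show "g x \<le> Cc * u x" using g green_Cu[OF nc] by (auto simp: is_green_def)
    show "Cc * u x \<le> g x" using g green_below[OF nc] by (auto simp: is_green_def)
  qed
qed

end

theorem proposition3p1:
  fixes b :: "'a \<Rightarrow> 'a \<Rightarrow> real" and m c :: "'a \<Rightarrow> real" and p :: real and x0 :: 'a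
    and X :: "nat \<Rightarrow> 'a set"
  assumes G: "weighted_graph b m c"
    and c0: "c = (\<lambda>_. 0)"
    and p: "1 < p"
    and Xfin: "\<And>n. finite (X n)"
    and Xinc: "\<And>n. X n \<subseteq> X (Suc n)"
    and Xexh: "(\<Union>n. X n) = UNIV"
    and o0: "x0 \<in> X 0"
    and Xbd: "\<And>n. X (Suc n) - X n \<subseteq> edge_bdry b (X n)"
  shows
    "(\<forall>n. \<exists>v. dirichlet_sol b m c p x0 (X n) v) \<and>
     (\<forall>us. (\<forall>n. dirichlet_sol b m c p x0 (X n) (us n)) \<longrightarrow>
        (\<forall>n x. 0 \<le> us n x \<and> us n x \<le> us (Suc n) x \<and> us (Suc n) x \<le> 1) \<and>
        (\<exists>u.
           (\<forall>x. (\<lambda>n. us n x) \<longlonglongrightarrow> u x) \<and>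
           (\<forall>n. us n \<in> Dp b c p) \<and> u \<in> Dp b c p \<and>
           (\<lambda>n. dnorm_op b c p x0 (\<lambda>x. us n x - u x)) \<longlonglongrightarrow> 0 \<and>
           u \<in> D0p b c p x0 \<and> u \<in> Fp b p \<and>
           (\<forall>x. x \<noteq> x0 \<longrightarrow> plap b m p u x = 0) \<and> u x0 = 1 \<and>
           (\<forall>x. 0 < u x \<and> u x \<le> 1) \<and>
           energy b c p u = cap b c p {x0} UNIV \<and>
           ((\<exists>k. \<forall>x. u x = k) \<longleftrightarrow> cap b c p {x0} UNIV = 0) \<and>
           (cap b c p {x0} UNIV = 0 \<longleftrightarrow> plap b m p u x0 = 0) \<and>
           (\<not> (\<exists>k. \<forall>x. u x = k) \<longrightarrow> (INF x. u x) = 0) \<and>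
           ((\<exists>g. is_green b m p x0 g) \<longleftrightarrow> \<not> (\<exists>k. \<forall>x. u x = k)) \<and>
           (\<forall>g. is_green b m p x0 g \<longrightarrow>
              (\<forall>x. g x = (m x0 * plap b m p u x0) powr (-1 / (p - 1)) * u x) \<and>
              g \<in> D0p b c p x0 \<and>
              (\<forall>x. g x / g x0 = u x))))"
proof -
  have G': "weighted_graph b m (\<lambda>_. 0)" using G c0 by simp
  interpret pg b m p by unfold_locales (rule G', rule p)
  have x0X: "x0 \<in> X n" for n
    using lift_Suc_mono_le[of X 0 n] Xinc o0 by auto
  have partA: "\<forall>n. \<exists>v. dirichlet_sol b m (\<lambda>_. 0) p x0 (X n) v"
    using dirichlet_exists[OF Xfin x0X] by blast
  have partB: "(\<forall>n x. 0 \<le> us n x \<and> us n x \<le> us (Suc n) x \<and> us (Suc n) x \<le> 1) \<and>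
        (\<exists>u.
           (\<forall>x. (\<lambda>n. us n x) \<longlonglongrightarrow> u x) \<and>
           (\<forall>n. us n \<in> Dp b (\<lambda>_. 0) p) \<and> u \<in> Dp b (\<lambda>_. 0) p \<and>
           (\<lambda>n. dnorm_op b (\<lambda>_. 0) p x0 (\<lambda>x. us n x - u x)) \<longlonglongrightarrow> 0 \<and>
           u \<in> D0p b (\<lambda>_. 0) p x0 \<and> u \<in> Fp b p \<and>
           (\<forall>x. x \<noteq> x0 \<longrightarrow> plap b m p u x = 0) \<and> u x0 = 1 \<and>
           (\<forall>x. 0 < u x \<and> u x \<le> 1) \<and>
           energy b (\<lambda>_. 0) p u = cap b (\<lambda>_. 0) p {x0} UNIV \<and>
           ((\<exists>k. \<forall>x. u x = k) \<longleftrightarrow> cap b (\<lambda>_. 0) p {x0} UNIV = 0) \<and>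
           (cap b (\<lambda>_. 0) p {x0} UNIV = 0 \<longleftrightarrow> plap b m p u x0 = 0) \<and>
           (\<not> (\<exists>k. \<forall>x. u x = k) \<longrightarrow> (INF x. u x) = 0) \<and>
           ((\<exists>g. is_green b m p x0 g) \<longleftrightarrow> \<not> (\<exists>k. \<forall>x. u x = k)) \<and>
           (\<forall>g. is_green b m p x0 g \<longrightarrow>
              (\<forall>x. g x = (m x0 * plap b m p u x0) powr (-1 / (p - 1)) * u x) \<and>
              g \<in> D0p b (\<lambda>_. 0) p x0 \<and>
              (\<forall>x. g x / g x0 = u x)))"
    if sols: "\<forall>n. dirichlet_sol b m (\<lambda>_. 0) p x0 (X n) (us n)" for us
  proof -
    interpret pot b m p X x0 us
      by unfold_locales (use Xfin Xinc Xexh o0 sols in auto)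
    have A1: "\<forall>n x. 0 \<le> us n x \<and> us n x \<le> us (Suc n) x \<and> us (Suc n) x \<le> 1"
      using us_nn us_mono us_le1 by blast
    have gr: "(\<forall>x. g x = (m x0 * plap b m p u x0) powr (-1 / (p - 1)) * u x) \<and>
              g \<in> D0p b (\<lambda>_. 0) p x0 \<and> (\<forall>x. g x / g x0 = u x)" if g: "is_green b m p x0 g" for g
    proof -
      have nc: "\<not> uconst" and ge: "\<And>x. g x = Cc * u x" using green_char[OF g] by auto
      have L: "L > 0" using Lpos[OF nc] .
      have C: "Cc > 0" using L by (simp add: Cc_def)
      have e1: "(m x0 * plap b m p u x0) powr (-1 / (p - 1)) = Cc" by (simp add: mplap Cc_def)
      have gfun: "g = (\<lambda>x. Cc * u x)" using ge by auto
      have "g \<in> D0p b (\<lambda>_. 0) p x0" unfolding gfun by (rule D0p_scale[OF uD0 C])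
      moreover have "g x / g x0 = u x" for x using C by (simp add: ge u1)
      ultimately show ?thesis using ge e1 by auto
    qed
    have "(\<forall>x. (\<lambda>n. us n x) \<longlonglongrightarrow> u x) \<and>
           (\<forall>n. us n \<in> Dp b (\<lambda>_. 0) p) \<and> u \<in> Dp b (\<lambda>_. 0) p \<and>
           (\<lambda>n. dnorm_op b (\<lambda>_. 0) p x0 (\<lambda>x. us n x - u x)) \<longlonglongrightarrow> 0 \<and>
           u \<in> D0p b (\<lambda>_. 0) p x0 \<and> u \<in> Fp b p \<and>
           (\<forall>x. x \<noteq> x0 \<longrightarrow> plap b m p u x = 0) \<and> u x0 = 1 \<and>
           (\<forall>x. 0 < u x \<and> u x \<le> 1) \<and>
           energy b (\<lambda>_. 0) p u = cap b (\<lambda>_. 0) p {x0} UNIV \<and>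
           ((\<exists>k. \<forall>x. u x = k) \<longleftrightarrow> cap b (\<lambda>_. 0) p {x0} UNIV = 0) \<and>
           (cap b (\<lambda>_. 0) p {x0} UNIV = 0 \<longleftrightarrow> plap b m p u x0 = 0) \<and>
           (\<not> (\<exists>k. \<forall>x. u x = k) \<longrightarrow> (INF x. u x) = 0) \<and>
           ((\<exists>g. is_green b m p x0 g) \<longleftrightarrow> \<not> (\<exists>k. \<forall>x. u x = k)) \<and>
           (\<forall>g. is_green b m p x0 g \<longrightarrow>
              (\<forall>x. g x = (m x0 * plap b m p u x0) powr (-1 / (p - 1)) * u x) \<and>
              g \<in> D0p b (\<lambda>_. 0) p x0 \<and>
              (\<forall>x. g x / g x0 = u x))"
    proof (intro conjI allI impI)
      show "(\<lambda>n. us n x) \<longlonglongrightarrow> u x" for x by (rule ul)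
      show "us n \<in> Dp b (\<lambda>_. 0) p" for n by (rule usDp)
      show "u \<in> Dp b (\<lambda>_. 0) p" by (rule uDp)
      show "(\<lambda>n. dnorm_op b (\<lambda>_. 0) p x0 (\<lambda>x. us n x - u x)) \<longlonglongrightarrow> 0" by (rule dnorm_conv)
      show "u \<in> D0p b (\<lambda>_. 0) p x0" by (rule uD0)
      show "u \<in> Fp b p" by (rule uF)
      show "plap b m p u x = 0" if "x \<noteq> x0" for x using uh[OF that] by (simp add: plap_eq)
      show "u x0 = 1" by (rule u1)
      show "0 < u x" for x by (rule upos)
      show "u x \<le> 1" for x by (rule u_le1)
      show "energy b (\<lambda>_. 0) p u = cap b (\<lambda>_. 0) p {x0} UNIV" using Eu cap_UNIV by simp
      show "(\<exists>k. \<forall>x. u x = k) \<longleftrightarrow> cap b (\<lambda>_. 0) p {x0} UNIV = 0" by (rule const_iff)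
      show "cap b (\<lambda>_. 0) p {x0} UNIV = 0 \<longleftrightarrow> plap b m p u x0 = 0" by (rule plap_iff)
      show "(INF x. u x) = 0" if "\<not> (\<exists>k. \<forall>x. u x = k)" using inf0 that by blast
      show "(\<exists>g. is_green b m p x0 g) \<longleftrightarrow> \<not> (\<exists>k. \<forall>x. u x = k)"
        using is_green_Cu green_char by blast
      show "g x = (m x0 * plap b m p u x0) powr (-1 / (p - 1)) * u x" if "is_green b m p x0 g" for g x
        using gr[OF that] by blast
      show "g \<in> D0p b (\<lambda>_. 0) p x0" if "is_green b m p x0 g" for g
        using gr[OF that] by blast
      show "g x / g x0 = u x" if "is_green b m p x0 g" for g x
        using gr[OF that] by blast
    qed
    note big = this
    show ?thesis
      apply (rule conjI[OF A1])
      apply (rule exI[where x=u])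
      apply (rule big)
      done
  qed
  show ?thesis unfolding c0
    apply (rule conjI)
     apply (rule partA)
    apply (intro allI impI)
    apply (erule partB)
    done
qed

end
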